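(* Let $f\colon\prod_{\mathbb{N}}\mathbb{Z}\to\prod_{\mathbb{N}}\mathbb{Z}$ be a morphism of light condensed abelian groups. Then the image of $f$ is isomorphic to $\prod_I\mathbb{Z}$ for some countable set $I$ (possibly finite).
   Context: $\prod_{\mathbb{N}}\mathbb{Z}$ denotes the light condensed abelian group associated to the product topological group (sequences of integers with the product topology); light condensed abelian groups are abelian sheaves on metrizable profinite sets for finite jointly surjective covers. The image is taken in the abelian category of light condensed abelian groups. *)

theory Defs
  imports "HOL-Analysis.Analysis"
begin

text \<open>Model of the site of light profinite sets: every light (metrizable) profinite set
is homeomorphic to a closed subset of the Cantor space (nat => bool) with the product
topology, so we use closed subsets of the Cantor space with all continuous maps
between them as an equivalent small site. Covers are finite jointly surjective families.\<close>

type_synonym cantor = "nat \<Rightarrow> bool"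

definition light_profinite :: "cantor set \<Rightarrow> bool" where
  "light_profinite S \<longleftrightarrow> closed S"

definition cmap :: "cantor set \<Rightarrow> cantor set \<Rightarrow> (cantor \<Rightarrow> cantor) set" where
  "cmap T S = {g. continuous_on T g \<and> g ` T \<subseteq> S}"

text \<open>Sections over S of the light condensed abelian group associated to the product
topological group prod_N Z: continuous maps S -> (nat => int) (product topology,
int discrete), made extensional outside S.\<close>
definition sec :: "cantor set \<Rightarrow> (cantor \<Rightarrow> nat \<Rightarrow> int) set" where
  "sec S = {u. continuous_on S u \<and> (\<forall>x. x \<notin> S \<longrightarrow> u x = undefined)}"

text \<open>Sections over S of prod_I Z (I a subset of nat, i.e. a countable set), realised
inside prod_N Z as sequences vanishing outside I.\<close>
definition secI :: "nat set \<Rightarrow> cantor set \<Rightarrow> (cantor \<Rightarrow> nat \<Rightarrow> int) set" where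
  "secI I S = {u \<in> sec S. \<forall>x\<in>S. \<forall>i. i \<notin> I \<longrightarrow> u x i = 0}"

definition sadd :: "cantor set \<Rightarrow> (cantor \<Rightarrow> nat \<Rightarrow> int) \<Rightarrow> (cantor \<Rightarrow> nat \<Rightarrow> int) \<Rightarrow> (cantor \<Rightarrow> nat \<Rightarrow> int)" where
  "sadd S u v = (\<lambda>x. if x \<in> S then (\<lambda>i. u x i + v x i) else undefined)"

definition pull :: "cantor set \<Rightarrow> (cantor \<Rightarrow> cantor) \<Rightarrow> (cantor \<Rightarrow> nat \<Rightarrow> int) \<Rightarrow> (cantor \<Rightarrow> nat \<Rightarrow> int)" where
  "pull T g u = (\<lambda>x. if x \<in> T then u (g x) else undefined)"

definition condensed_endo :: "(cantor set \<Rightarrow> (cantor \<Rightarrow> nat \<Rightarrow> int) \<Rightarrow> (cantor \<Rightarrow> nat \<Rightarrow> int)) \<Rightarrow> bool" where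
  "condensed_endo f \<longleftrightarrow>
     (\<forall>S. light_profinite S \<longrightarrow>
        (\<forall>u\<in>sec S. f S u \<in> sec S) \<and>
        (\<forall>u\<in>sec S. \<forall>v\<in>sec S. f S (sadd S u v) = sadd S (f S u) (f S v))) \<and>
     (\<forall>S T g. light_profinite S \<longrightarrow> light_profinite T \<longrightarrow> g \<in> cmap T S \<longrightarrow>
        (\<forall>u\<in>sec S. f T (pull T g u) = pull T g (f S u)))"

text \<open>The image of f in the abelian category of light condensed abelian groups:
the sheafification of the presheaf image, i.e. the subsheaf of sections which,
after pullback to some finite jointly surjective cover, lie in the image.\<close>
definition cimage :: "(cantor set \<Rightarrow> (cantor \<Rightarrow> nat \<Rightarrow> int) \<Rightarrow> (cantor \<Rightarrow> nat \<Rightarrow> int)) \<Rightarrow> cantor set \<Rightarrow> (cantor \<Rightarrow> nat \<Rightarrow> int) set" where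
  "cimage f S = {s \<in> sec S. \<exists>(n::nat) Ts gs.
      (\<forall>j<n. light_profinite (Ts j) \<and> gs j \<in> cmap (Ts j) S) \<and>
      S \<subseteq> (\<Union>j<n. gs j ` Ts j) \<and>
      (\<forall>j<n. pull (Ts j) (gs j) s \<in> f (Ts j) ` sec (Ts j))}"

definition image_iso_prodZ :: "(cantor set \<Rightarrow> (cantor \<Rightarrow> nat \<Rightarrow> int) \<Rightarrow> (cantor \<Rightarrow> nat \<Rightarrow> int)) \<Rightarrow> nat set \<Rightarrow> (cantor set \<Rightarrow> (cantor \<Rightarrow> nat \<Rightarrow> int) \<Rightarrow> (cantor \<Rightarrow> nat \<Rightarrow> int)) \<Rightarrow> bool" where
  "image_iso_prodZ f I \<phi> \<longleftrightarrow>
     (\<forall>S. light_profinite S \<longrightarrow>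
        bij_betw (\<phi> S) (cimage f S) (secI I S) \<and>
        (\<forall>u\<in>cimage f S. \<forall>v\<in>cimage f S. \<phi> S (sadd S u v) = sadd S (\<phi> S u) (\<phi> S v))) \<and>
     (\<forall>S T g. light_profinite S \<longrightarrow> light_profinite T \<longrightarrow> g \<in> cmap T S \<longrightarrow>
        (\<forall>u\<in>cimage f S. \<phi> T (pull T g u) = pull T g (\<phi> S u)))"

end

theory Submission
  imports Defs
begin

definition bnd :: "nat \<Rightarrow> (nat \<Rightarrow> int) set" where
  "bnd M = {u. \<forall>j\<ge>M. u j = 0}"

definition fsupp :: "(nat \<Rightarrow> int) \<Rightarrow> bool" where
  "fsupp u \<longleftrightarrow> (\<exists>M. u \<in> bnd M)"

definition dotp :: "(nat \<Rightarrow> int) \<Rightarrow> (nat \<Rightarrow> int) \<Rightarrow> int" where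
  "dotp v x = (\<Sum>j\<in>{j. v j \<noteq> 0}. v j * x j)"

lemma bnd_mono: "M \<le> M' \<Longrightarrow> u \<in> bnd M \<Longrightarrow> u \<in> bnd M'"
  by (auto simp: bnd_def)

lemma dotp_bnd: assumes "v \<in> bnd M" shows "dotp v x = (\<Sum>j<M. v j * x j)"
proof -
  have sub: "{j. v j \<noteq> 0} \<subseteq> {..<M}" using assms by (auto simp: bnd_def not_less[symmetric])
  show ?thesis unfolding dotp_def
    by (rule sum.mono_neutral_left) (use sub in auto)
qed

lemma fsupp_bnd: "fsupp u \<Longrightarrow> \<exists>M. u \<in> bnd M" by (simp add: fsupp_def)

lemma bnd_lin: "u \<in> bnd M \<Longrightarrow> v \<in> bnd M \<Longrightarrow> (\<lambda>j. u j + c * v j) \<in> bnd M"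
  by (auto simp: bnd_def)

lemma fsupp_lin: assumes "fsupp u" "fsupp v" shows "fsupp (\<lambda>j. u j + c * v j)"
proof -
  obtain M1 M2 where "u \<in> bnd M1" "v \<in> bnd M2" using assms by (auto simp: fsupp_def)
  then have "u \<in> bnd (max M1 M2)" "v \<in> bnd (max M1 M2)" by (auto simp: bnd_def)
  then show ?thesis unfolding fsupp_def by (blast intro: bnd_lin)
qed

lemma dotp_lin: assumes "fsupp u" "fsupp v"
  shows "dotp (\<lambda>j. u j + c * v j) x = dotp u x + c * dotp v x"
proof -
  obtain M1 M2 where "u \<in> bnd M1" "v \<in> bnd M2" using assms by (auto simp: fsupp_def)
  then have a: "u \<in> bnd (max M1 M2)" "v \<in> bnd (max M1 M2)" by (auto simp: bnd_def)
  then have b: "(\<lambda>j. u j + c * v j) \<in> bnd (max M1 M2)" by (rule bnd_lin)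
  show ?thesis using a b
    by (simp add: dotp_bnd[OF a(1)] dotp_bnd[OF a(2)] dotp_bnd[OF b] sum.distrib sum_distrib_left
        algebra_simps)
qed

lemma dotp_lin2: "dotp v (\<lambda>j. x j + c * y j) = dotp v x + c * dotp v y"
  by (simp add: dotp_def sum.distrib sum_distrib_left algebra_simps)

lemma dotp_zero_left[simp]: "dotp (\<lambda>j. 0) x = 0" by (simp add: dotp_def)

lemma int_subgroup:
  fixes G :: "int set"
  assumes "g \<in> G" "g \<noteq> 0" and cl: "\<And>x y c. x \<in> G \<Longrightarrow> y \<in> G \<Longrightarrow> x + c * y \<in> G"
  shows "\<exists>d>0. d \<in> G \<and> (\<forall>y\<in>G. d dvd y)"
proof -
  have ag: "\<bar>g\<bar> \<in> G"
  proof (cases "g \<ge> 0")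
    case True then show ?thesis using assms(1) by simp
  next
    case False
    have "g + (-2) * g \<in> G" using cl assms(1) by blast
    then show ?thesis using False by simp
  qed
  define S where "S = {n::nat. 0 < n \<and> int n \<in> G}"
  have "nat \<bar>g\<bar> \<in> S" using ag assms(2) by (simp add: S_def)
  then have ne: "S \<noteq> {}" by blast
  define n0 where "n0 = Least (\<lambda>n. n \<in> S)"
  have n0S: "n0 \<in> S" unfolding n0_def using ne by (metis LeastI ex_in_conv)
  have n0min: "\<And>n. n \<in> S \<Longrightarrow> n0 \<le> n" unfolding n0_def by (rule Least_le)
  have "\<forall>y\<in>G. int n0 dvd y"
  proof
    fix y assume y: "y \<in> G"
    have "y + (- (y div int n0)) * int n0 \<in> G" using cl[of y "int n0" "- (y div int n0)"] y n0S by (simp add: S_def)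
    moreover have "y + (- (y div int n0)) * int n0 = y mod int n0"
      by (simp add: minus_div_mult_eq_mod[symmetric] algebra_simps)
    ultimately have m: "y mod int n0 \<in> G" by simp
    have pos: "int n0 > 0" using n0S by (simp add: S_def)
    show "int n0 dvd y"
    proof (rule ccontr)
      assume "\<not> int n0 dvd y"
      then have "y mod int n0 \<noteq> 0" by (simp add: dvd_eq_mod_eq_0)
      moreover have "y mod int n0 \<ge> 0" "y mod int n0 < int n0" using pos by auto
      ultimately have "nat (y mod int n0) \<in> S" using m by (simp add: S_def)
      then have "n0 \<le> nat (y mod int n0)" by (rule n0min)
      then show False using \<open>y mod int n0 < int n0\<close> \<open>y mod int n0 \<ge> 0\<close> by (simp add: le_nat_iff)
    qed
  qed
  then show ?thesis using n0S by (intro exI[of _ "int n0"]) (auto simp: S_def)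
qed


lemma sum_upd_split:
  fixes lam c :: "nat \<Rightarrow> int"
  assumes "q < m" "lam q = 0"
  shows "(\<Sum>j<m. (if j = q then A else s * lam j) * c j) = A * c q + s * (\<Sum>j<m. lam j * c j)"
proof -
  have f: "finite {..<m}" "q \<in> {..<m}" using assms by auto
  have "(\<Sum>j<m. (if j = q then A else s * lam j) * c j)
      = A * c q + (\<Sum>j\<in>{..<m}-{q}. (if j = q then A else s * lam j) * c j)"
    using sum.remove[OF f, of "\<lambda>j. (if j = q then A else s * lam j) * c j"] by simp
  also have "(\<Sum>j\<in>{..<m}-{q}. (if j = q then A else s * lam j) * c j) = (\<Sum>j\<in>{..<m}-{q}. s * (lam j * c j))"
    by (rule sum.cong) auto
  also have "\<dots> = s * (\<Sum>j\<in>{..<m}-{q}. lam j * c j)" by (simp add: sum_distrib_left)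
  also have "(\<Sum>j\<in>{..<m}-{q}. lam j * c j) = (\<Sum>j<m. lam j * c j)"
    using sum.remove[OF f, of "\<lambda>j. lam j * c j"] assms by simp
  finally show ?thesis .
qed

lemma tri_aux:
  fixes \<kappa> :: "nat \<Rightarrow> nat \<Rightarrow> int"
  assumes low: "\<And>n j. n < m \<Longrightarrow> j < n \<Longrightarrow> \<kappa> n j = 0"
    and zer: "\<And>n j. n < m \<Longrightarrow> \<kappa> n n = 0 \<Longrightarrow> \<kappa> n j = 0"
  shows "d \<le> m \<Longrightarrow> \<exists>k. k \<noteq> 0 \<and> (\<exists>lam. lam \<in> bnd m \<and> (\<forall>j<m-d. lam j = 0) \<and>
           (\<forall>n. m - d \<le> n \<and> n < m \<longrightarrow> k * \<kappa> n m = (\<Sum>j<m. lam j * \<kappa> n j)))"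
proof (induction d)
  case 0
  show ?case by (rule exI[of _ 1], rule conjI, simp, rule exI[of _ "\<lambda>j. 0"]) (auto simp: bnd_def)
next
  case (Suc d)
  then obtain k lam where k: "k \<noteq> 0" and lb: "lam \<in> bnd m" and lz: "\<forall>j<m-d. lam j = 0"
    and eqs: "\<forall>n. m - d \<le> n \<and> n < m \<longrightarrow> k * \<kappa> n m = (\<Sum>j<m. lam j * \<kappa> n j)" by auto
  define q where "q = m - Suc d"
  have qm: "q < m" and qd: "m - d = Suc q" using Suc.prems by (auto simp: q_def)
  have lq: "lam q = 0" using lz qd by simp
  define s where "s = (if \<kappa> q q = 0 then 1 else \<kappa> q q)"
  have s0: "s \<noteq> 0" by (simp add: s_def)
  define A where "A = k * \<kappa> q m - (\<Sum>j<m. lam j * \<kappa> q j)"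
  define lam' where "lam' = (\<lambda>j. if j = q then A else s * lam j)"
  have split: "\<And>c. (\<Sum>j<m. lam' j * c j) = A * c q + s * (\<Sum>j<m. lam j * c j)"
    unfolding lam'_def by (rule sum_upd_split[where q=q and m=m and lam=lam, OF qm lq])
  show ?case
  proof (rule exI[of _ "s * k"], intro conjI exI[of _ lam'])
    show "s * k \<noteq> 0" using s0 k by simp
    show "lam' \<in> bnd m" using lb qm by (auto simp: bnd_def lam'_def)
    show "\<forall>j<m - Suc d. lam' j = 0" using lz by (auto simp: lam'_def q_def)
    show "\<forall>n. m - Suc d \<le> n \<and> n < m \<longrightarrow> s * k * \<kappa> n m = (\<Sum>j<m. lam' j * \<kappa> n j)"
    proof (intro allI impI)
      fix n assume n: "m - Suc d \<le> n \<and> n < m"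
      show "s * k * \<kappa> n m = (\<Sum>j<m. lam' j * \<kappa> n j)"
      proof (cases "n = q")
        case True
        show ?thesis
        proof (cases "\<kappa> q q = 0")
          case True
          then have "\<And>j. \<kappa> q j = 0" using zer qm by blast
          then show ?thesis using \<open>n = q\<close> by simp
        next
          case False
          then have "s = \<kappa> q q" by (simp add: s_def)
          then show ?thesis using \<open>n = q\<close> split[of "\<kappa> q"] by (simp add: A_def algebra_simps)
        qed
      next
        case False
        then have nq: "q < n" using n q_def by auto
        then have "\<kappa> n q = 0" using low n by blast
        moreover have "k * \<kappa> n m = (\<Sum>j<m. lam j * \<kappa> n j)" using eqs n nq qd by auto
        ultimately show ?thesis using split[of "\<kappa> n"] by simp
      qed
    qed
  qed
qed

lemma tri:
  fixes \<kappa> :: "nat \<Rightarrow> nat \<Rightarrow> int"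
  assumes low: "\<And>n j. n < m \<Longrightarrow> j < n \<Longrightarrow> \<kappa> n j = 0"
    and zer: "\<And>n j. n < m \<Longrightarrow> \<kappa> n n = 0 \<Longrightarrow> \<kappa> n j = 0"
  shows "\<exists>k>0. \<exists>lam. lam \<in> bnd m \<and> (\<forall>n<m. k * \<kappa> n m = (\<Sum>j<m. lam j * \<kappa> n j))"
proof -
  obtain k lam where k: "k \<noteq> 0" and lb: "lam \<in> bnd m"
    and eqs: "\<forall>n. m - m \<le> n \<and> n < m \<longrightarrow> k * \<kappa> n m = (\<Sum>j<m. lam j * \<kappa> n j)"
  proof -
    have "\<exists>k. k \<noteq> 0 \<and> (\<exists>lam. lam \<in> bnd m \<and> (\<forall>j<m-m. lam j = 0) \<and>
           (\<forall>n. m - m \<le> n \<and> n < m \<longrightarrow> k * \<kappa> n m = (\<Sum>j<m. lam j * \<kappa> n j)))"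
      by (rule tri_aux[where d=m and m=m and \<kappa>=\<kappa>]) (use low zer in auto)
    then show ?thesis using that by blast
  qed
  show ?thesis
  proof (cases "k > 0")
    case True then show ?thesis using lb eqs by auto
  next
    case False
    then have "-k > 0" using k by simp
    moreover have "(\<lambda>j. - lam j) \<in> bnd m" using lb by (auto simp: bnd_def)
    moreover have "\<forall>n<m. (-k) * \<kappa> n m = (\<Sum>j<m. (- lam j) * \<kappa> n j)"
      using eqs by (simp add: sum_negf)
    ultimately show ?thesis by blast
  qed
qed


locale rowsys =
  fixes r :: "nat \<Rightarrow> nat \<Rightarrow> int"
  assumes rfs: "\<And>i. fsupp (r i)"
begin

definition KK where "KK = {x. \<forall>i. dotp (r i) x = 0}"
definition NN where "NN = {v. fsupp v \<and> (\<forall>x\<in>KK. dotp v x = 0)}"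
definition wit where "wit m \<longleftrightarrow> (\<exists>x\<in>KK. (\<forall>j<m. x j = 0) \<and> x m \<noteq> 0)"

lemma KK_lin: "x \<in> KK \<Longrightarrow> y \<in> KK \<Longrightarrow> (\<lambda>j. x j + c * y j) \<in> KK"
  by (simp add: KK_def dotp_lin2)

lemma KK_zero: "(\<lambda>j. 0) \<in> KK" by (simp add: KK_def dotp_def)

lemma NN_lin: "u \<in> NN \<Longrightarrow> v \<in> NN \<Longrightarrow> (\<lambda>j. u j + c * v j) \<in> NN"
  by (simp add: NN_def dotp_lin fsupp_lin)

lemma NN_zero: "(\<lambda>j. 0) \<in> NN" by (simp add: NN_def fsupp_def bnd_def)

lemma r_NN: "r i \<in> NN" using rfs by (simp add: NN_def KK_def)

lemma kappa_ex: "\<exists>\<kappa>. \<kappa> \<in> KK \<and> (\<forall>j<n. \<kappa> j = 0) \<and>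
   (wit n \<longrightarrow> \<kappa> n \<noteq> 0 \<and> (\<forall>y\<in>KK. (\<forall>j<n. y j = 0) \<longrightarrow> \<kappa> n dvd y n)) \<and>
   (\<not> wit n \<longrightarrow> \<kappa> = (\<lambda>j. 0))"
proof (cases "wit n")
  case False then show ?thesis using KK_zero by auto
next
  case True
  then obtain x where x: "x \<in> KK" "\<forall>j<n. x j = 0" "x n \<noteq> 0" by (auto simp: wit_def)
  define G where "G = {y n | y. y \<in> KK \<and> (\<forall>j<n. y j = 0)}"
  have "x n \<in> G" using x by (auto simp: G_def)
  moreover have "\<And>a b c. a \<in> G \<Longrightarrow> b \<in> G \<Longrightarrow> a + c * b \<in> G"
  proof -
    fix a b c assume "a \<in> G" "b \<in> G"
    then obtain ya yb where "ya \<in> KK" "\<forall>j<n. ya j = 0" "a = ya n" "yb \<in> KK" "\<forall>j<n. yb j = 0" "b = yb n"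
      by (auto simp: G_def)
    then show "a + c * b \<in> G" unfolding G_def
      by (intro CollectI exI[of _ "\<lambda>j. ya j + c * yb j"]) (auto intro: KK_lin)
  qed
  ultimately obtain d where d: "d > 0" "d \<in> G" "\<forall>y\<in>G. d dvd y"
    using int_subgroup[of "x n" G] x(3) by blast
  then obtain y where y: "y \<in> KK" "\<forall>j<n. y j = 0" "y n = d" by (auto simp: G_def)
  show ?thesis using True d y by (intro exI[of _ y]) (auto simp: G_def)
qed

definition kap where "kap n = (SOME \<kappa>. \<kappa> \<in> KK \<and> (\<forall>j<n. \<kappa> j = 0) \<and>
   (wit n \<longrightarrow> \<kappa> n \<noteq> 0 \<and> (\<forall>y\<in>KK. (\<forall>j<n. y j = 0) \<longrightarrow> \<kappa> n dvd y n)) \<and>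
   (\<not> wit n \<longrightarrow> \<kappa> = (\<lambda>j. 0)))"

lemma kap: "kap n \<in> KK" "\<And>j. j < n \<Longrightarrow> kap n j = 0"
   "wit n \<Longrightarrow> kap n n \<noteq> 0" "wit n \<Longrightarrow> y \<in> KK \<Longrightarrow> (\<forall>j<n. y j = 0) \<Longrightarrow> kap n n dvd y n"
   "\<not> wit n \<Longrightarrow> kap n = (\<lambda>j. 0)"
  using someI_ex[OF kappa_ex[of n]] unfolding kap_def[symmetric] by blast+

lemma peel: "x \<in> KK \<Longrightarrow> \<exists>a. (\<lambda>j. x j - (\<Sum>n<M. a n * kap n j)) \<in> KK \<and> (\<forall>j<M. x j - (\<Sum>n<M. a n * kap n j) = 0)"
proof (induction M)
  case 0 then show ?case by simp
next
  case (Suc M)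
  then obtain a where a1: "(\<lambda>j. x j - (\<Sum>n<M. a n * kap n j)) \<in> KK"
      and a2: "\<forall>j<M. x j - (\<Sum>n<M. a n * kap n j) = 0" by blast
  define y where "y = (\<lambda>j. x j - (\<Sum>n<M. a n * kap n j))"
  have yK: "y \<in> KK" and yz: "\<forall>j<M. y j = 0" using a1 a2 by (auto simp: y_def)
  define q where "q = (if wit M then y M div kap M M else 0)"
  have yq: "y M = q * kap M M"
  proof (cases "wit M")
    case True
    then have "kap M M dvd y M" using kap(4)[of M y] yK yz by blast
    then show ?thesis using True by (simp add: q_def)
  next
    case False
    then show ?thesis using yK yz by (auto simp: wit_def q_def)
  qed
  define a' where "a' = a(M := q)"
  have s: "\<And>j. (\<Sum>n<Suc M. a' n * kap n j) = (\<Sum>n<M. a n * kap n j) + q * kap M j"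
    by (simp add: a'_def)
  have e: "(\<lambda>j. x j - (\<Sum>n<Suc M. a' n * kap n j)) = (\<lambda>j. y j + (- q) * kap M j)"
    by (subst s) (simp add: y_def algebra_simps)
  show ?case
  proof (intro exI[of _ a'] conjI)
    show "(\<lambda>j. x j - (\<Sum>n<Suc M. a' n * kap n j)) \<in> KK" unfolding e by (rule KK_lin[OF yK kap(1)])
    show "\<forall>j<Suc M. x j - (\<Sum>n<Suc M. a' n * kap n j) = 0"
    proof (intro allI impI)
      fix j assume "j < Suc M"
      have "x j - (\<Sum>n<Suc M. a' n * kap n j) = y j + (- q) * kap M j" using fun_cong[OF e, of j] by simp
      also have "\<dots> = 0"
      proof (cases "j < M")
        case True then show ?thesis using yz kap(2) by simp
      next
        case False then have "j = M" using \<open>j < Suc M\<close> by simp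
        then show ?thesis using yq by simp
      qed
      finally show "x j - (\<Sum>n<Suc M. a' n * kap n j) = 0" .
    qed
  qed
qed

lemma Wlem:
  assumes nw: "\<not> wit m"
  shows "\<exists>k>0. \<exists>lam\<in>bnd m. \<forall>x\<in>KK. k * x m = (\<Sum>j<m. lam j * x j)"
proof -
  have low: "\<And>n j. n < m \<Longrightarrow> j < n \<Longrightarrow> kap n j = 0" using kap(2) by blast
  have zer: "\<And>n j. n < m \<Longrightarrow> kap n n = 0 \<Longrightarrow> kap n j = 0"
  proof -
    fix n j assume "n < m" "kap n n = 0"
    then have "\<not> wit n" using kap(3) by blast
    then show "kap n j = 0" using kap(5) by simp
  qed
  obtain k lam where k: "k > 0" and lb: "lam \<in> bnd m"
     and eqs: "\<forall>n<m. k * kap n m = (\<Sum>j<m. lam j * kap n j)"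
    using tri[where m=m and \<kappa>=kap, OF low zer] by blast
  have "\<forall>x\<in>KK. k * x m = (\<Sum>j<m. lam j * x j)"
  proof
    fix x assume xK: "x \<in> KK"
    obtain a where a1: "(\<lambda>j. x j - (\<Sum>n<m. a n * kap n j)) \<in> KK"
      and a2: "\<forall>j<m. x j - (\<Sum>n<m. a n * kap n j) = 0" using peel[OF xK] by blast
    have am: "x m - (\<Sum>n<m. a n * kap n m) = 0"
    proof (rule ccontr)
      assume "x m - (\<Sum>n<m. a n * kap n m) \<noteq> 0"
      then have "wit m" unfolding wit_def using a1 a2
        by (intro bexI[of _ "\<lambda>j. x j - (\<Sum>n<m. a n * kap n j)"]) auto
      then show False using nw by simp
    qed
    have xj: "x j = (\<Sum>n<m. a n * kap n j)" if "j \<le> m" for j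
    proof (cases "j < m")
      case True then show ?thesis using a2 by simp
    next
      case False then have "j = m" using that by simp
      then show ?thesis using am by simp
    qed
    have "k * x m = k * (\<Sum>n<m. a n * kap n m)" using xj[of m] by simp
    also have "\<dots> = (\<Sum>n<m. a n * (k * kap n m))"
      by (simp add: sum_distrib_left algebra_simps)
    also have "\<dots> = (\<Sum>n<m. a n * (\<Sum>j<m. lam j * kap n j))"
      using eqs by (intro sum.cong) auto
    also have "\<dots> = (\<Sum>n<m. \<Sum>j<m. lam j * (a n * kap n j))"
      by (simp add: sum_distrib_left algebra_simps)
    also have "\<dots> = (\<Sum>j<m. \<Sum>n<m. lam j * (a n * kap n j))"
      by (rule sum.swap)
    also have "\<dots> = (\<Sum>j<m. lam j * (\<Sum>n<m. a n * kap n j))"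
      by (simp add: sum_distrib_left)
    also have "\<dots> = (\<Sum>j<m. lam j * x j)"
      using xj by (intro sum.cong) auto
    finally show "k * x m = (\<Sum>j<m. lam j * x j)" .
  qed
  then show ?thesis using k lb by blast
qed

end

lemma bnd_comb: "u \<in> bnd m \<Longrightarrow> v \<in> bnd m \<Longrightarrow> (\<lambda>j. a * u j + b * v j) \<in> bnd m"
  by (auto simp: bnd_def)

lemma bnd_zero[simp]: "(\<lambda>j. 0) \<in> bnd m" by (simp add: bnd_def)

lemma bnd_fsupp: "u \<in> bnd m \<Longrightarrow> fsupp u" by (auto simp: fsupp_def)

lemma bnd_sum: "(\<And>n. n < (M::nat) \<Longrightarrow> g n \<in> bnd L) \<Longrightarrow> (\<lambda>j. \<Sum>n<M. b n * g n j) \<in> bnd L"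
  by (auto simp: bnd_def)

context rowsys begin

lemma NN_comb: "u \<in> NN \<Longrightarrow> v \<in> NN \<Longrightarrow> (\<lambda>j. a * u j + b * v j) \<in> NN"
proof -
  assume u: "u \<in> NN" and v: "v \<in> NN"
  have "(\<lambda>j. 0 + a * u j) \<in> NN" using NN_lin[OF NN_zero u] .
  then have "(\<lambda>j. a * u j) \<in> NN" by simp
  from NN_lin[OF this v, of b] show ?thesis .
qed

lemma NN_sum: "(\<And>n. n < (M::nat) \<Longrightarrow> g n \<in> NN) \<Longrightarrow> (\<lambda>j. \<Sum>n<M. b n * g n j) \<in> NN"
proof (induction M)
  case 0 then show ?case using NN_zero by simp
next
  case (Suc M)
  then have "(\<lambda>j. 1 * (\<Sum>n<M. b n * g n j) + b M * g M j) \<in> NN"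
    by (intro NN_comb) auto
  then show ?case by simp
qed

definition PP where "PP m = {u. fsupp u \<and> (\<exists>k>0. \<exists>w\<in>bnd m. \<exists>\<nu>\<in>NN. \<forall>j. k * u j = w j + \<nu> j)}"

lemma PP_fsupp: "u \<in> PP m \<Longrightarrow> fsupp u" by (simp add: PP_def)

lemma PP_lin: assumes "u \<in> PP m" "v \<in> PP m" shows "(\<lambda>j. u j + c * v j) \<in> PP m"
proof -
  obtain k1 w1 \<nu>1 where 1: "k1 > 0" "w1 \<in> bnd m" "\<nu>1 \<in> NN" "\<forall>j. k1 * u j = w1 j + \<nu>1 j"
    using assms(1) by (auto simp: PP_def)
  obtain k2 w2 \<nu>2 where 2: "k2 > 0" "w2 \<in> bnd m" "\<nu>2 \<in> NN" "\<forall>j. k2 * v j = w2 j + \<nu>2 j"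
    using assms(2) by (auto simp: PP_def)
  have f: "fsupp (\<lambda>j. u j + c * v j)" using assms by (intro fsupp_lin) (auto simp: PP_def)
  have eq: "\<forall>j. (k1 * k2) * (u j + c * v j) = (k2 * w1 j + (c * k1) * w2 j) + (k2 * \<nu>1 j + (c * k1) * \<nu>2 j)"
  proof
    fix j
    have "(k1 * k2) * (u j + c * v j) = k2 * (k1 * u j) + (c * k1) * (k2 * v j)" by (simp add: algebra_simps)
    also have "\<dots> = k2 * (w1 j + \<nu>1 j) + (c * k1) * (w2 j + \<nu>2 j)" using 1(4) 2(4) by simp
    finally show "(k1 * k2) * (u j + c * v j) = (k2 * w1 j + (c * k1) * w2 j) + (k2 * \<nu>1 j + (c * k1) * \<nu>2 j)"
      by (simp add: algebra_simps)
  qed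
  show ?thesis unfolding PP_def
    using f eq 1 2 bnd_comb[OF 1(2) 2(2)] NN_comb[OF 1(3) 2(3)]
    by (intro CollectI conjI exI[of _ "k1 * k2"] bexI[of _ "\<lambda>j. k2 * w1 j + (c * k1) * w2 j"]
          bexI[of _ "\<lambda>j. k2 * \<nu>1 j + (c * k1) * \<nu>2 j"]) auto
qed

lemma bnd_PP: "u \<in> bnd m \<Longrightarrow> u \<in> PP m"
  unfolding PP_def using NN_zero
  by (intro CollectI conjI bnd_fsupp exI[of _ 1] bexI[of _ u] bexI[of _ "\<lambda>j. 0"]) auto

lemma NN_PP: "u \<in> NN \<Longrightarrow> u \<in> PP m"
  unfolding PP_def
  by (intro CollectI conjI exI[of _ 1] bexI[of _ "\<lambda>j. 0"] bexI[of _ u]) (auto simp: NN_def)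

lemma PP_zero: "(\<lambda>j. 0) \<in> PP m" by (rule bnd_PP) simp

lemma PP_mono: "m \<le> m' \<Longrightarrow> u \<in> PP m \<Longrightarrow> u \<in> PP m'"
  unfolding PP_def by (blast intro: bnd_mono)

lemma PP_sum: "(\<And>n. n < (M::nat) \<Longrightarrow> g n \<in> PP L) \<Longrightarrow> (\<lambda>j. \<Sum>n<M. b n * g n j) \<in> PP L"
proof (induction M)
  case 0 then show ?case using PP_zero by simp
next
  case (Suc M)
  then have "(\<lambda>j. (\<Sum>n<M. b n * g n j) + b M * g M j) \<in> PP L"
    by (intro PP_lin) auto
  then show ?case by simp
qed

lemma dotp_smul: "fsupp u \<Longrightarrow> dotp (\<lambda>j. c * u j) x = c * dotp u x"
  using dotp_lin[of "\<lambda>j. 0" u c x] by (simp add: fsupp_def bnd_def)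

lemma dotp_add: "fsupp u \<Longrightarrow> fsupp v \<Longrightarrow> dotp (\<lambda>j. u j + v j) x = dotp u x + dotp v x"
  using dotp_lin[of u v 1 x] by simp

lemma PP0: assumes "u \<in> PP 0" shows "u \<in> NN"
proof -
  obtain k w \<nu> where k: "k > 0" "w \<in> bnd 0" "\<nu> \<in> NN" "\<forall>j. k * u j = w j + \<nu> j"
    using assms by (auto simp: PP_def)
  have fu: "fsupp u" using assms by (simp add: PP_def)
  have "\<And>j. w j = 0" using k(2) by (simp add: bnd_def)
  then have e: "(\<lambda>j. k * u j) = \<nu>" using k(4) by auto
  have "\<forall>x\<in>KK. dotp u x = 0"
  proof
    fix x assume "x \<in> KK"
    have "k * dotp u x = dotp \<nu> x" using dotp_smul[OF fu, of k x] e by simp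
    also have "\<dots> = 0" using k(3) \<open>x \<in> KK\<close> by (simp add: NN_def)
    finally show "dotp u x = 0" using k(1) by simp
  qed
  then show ?thesis using fu by (simp add: NN_def)
qed

lemma PP_inactive: assumes nw: "\<not> wit m" and u: "u \<in> PP (Suc m)" shows "u \<in> PP m"
proof -
  obtain k0 lam where k0: "k0 > 0" and lb: "lam \<in> bnd m" and eqs: "\<forall>x\<in>KK. k0 * x m = (\<Sum>j<m. lam j * x j)"
    using Wlem[OF nw] by blast
  define \<nu>0 where "\<nu>0 = (\<lambda>j. k0 * (if j = m then 1 else 0) - lam j)"
  have \<nu>0b: "\<nu>0 \<in> bnd (Suc m)" using lb by (auto simp: bnd_def \<nu>0_def)
  have "\<nu>0 \<in> NN"
  proof -
    have "dotp \<nu>0 x = 0" if "x \<in> KK" for x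
    proof -
      have "dotp \<nu>0 x = (\<Sum>j<Suc m. \<nu>0 j * x j)" by (rule dotp_bnd[OF \<nu>0b])
      also have "\<dots> = (\<Sum>j<m. \<nu>0 j * x j) + \<nu>0 m * x m" by simp
      also have "(\<Sum>j<m. \<nu>0 j * x j) = - (\<Sum>j<m. lam j * x j)"
        by (simp add: \<nu>0_def sum_negf[symmetric])
      also have "\<nu>0 m = k0" using lb by (simp add: \<nu>0_def bnd_def)
      finally show ?thesis using eqs that by simp
    qed
    then show ?thesis using \<nu>0b by (auto simp: NN_def intro: bnd_fsupp)
  qed
  obtain k w \<nu> where k: "k > 0" "w \<in> bnd (Suc m)" "\<nu> \<in> NN" "\<forall>j. k * u j = w j + \<nu> j"
    using u by (auto simp: PP_def)
  define w' where "w' = w(m := 0)"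
  have w'b: "w' \<in> bnd m" using k(2) by (auto simp: bnd_def w'_def)
  define W where "W = (\<lambda>j. k0 * w' j + w m * lam j)"
  define V where "V = (\<lambda>j. w m * \<nu>0 j + k0 * \<nu> j)"
  have Wb: "W \<in> bnd m" unfolding W_def by (rule bnd_comb[OF w'b lb])
  have VN: "V \<in> NN" unfolding V_def by (rule NN_comb[OF \<open>\<nu>0 \<in> NN\<close> k(3)])
  have lm: "lam m = 0" using lb by (simp add: bnd_def)
  have eq: "\<forall>j. (k0 * k) * u j = W j + V j"
  proof
    fix j
    have "(k0 * k) * u j = k0 * (w j + \<nu> j)" using k(4) by (simp add: algebra_simps)
    then show "(k0 * k) * u j = W j + V j"
      by (cases "j = m") (auto simp: W_def V_def w'_def \<nu>0_def lm algebra_simps)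
  qed
  show ?thesis unfolding PP_def using u k0 k(1) eq Wb VN
    by (intro CollectI conjI PP_fsupp exI[of _ "k0 * k"] bexI[of _ W] bexI[of _ V]) auto
qed

definition xw where "xw m = (SOME x. x \<in> KK \<and> (\<forall>j<m. x j = 0) \<and> x m \<noteq> 0)"

lemma xw: assumes "wit m" shows "xw m \<in> KK" "\<And>j. j < m \<Longrightarrow> xw m j = 0" "xw m m \<noteq> 0"
proof -
  have "\<exists>x. x \<in> KK \<and> (\<forall>j<m. x j = 0) \<and> x m \<noteq> 0" using assms by (auto simp: wit_def)
  from someI_ex[OF this] show "xw m \<in> KK" "\<And>j. j < m \<Longrightarrow> xw m j = 0" "xw m m \<noteq> 0"
    unfolding xw_def[symmetric] by auto
qed

lemma rho_PP: assumes "wit m" "u \<in> PP m" shows "dotp u (xw m) = 0"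
proof -
  obtain k w \<nu> where k: "k > 0" "w \<in> bnd m" "\<nu> \<in> NN" "\<forall>j. k * u j = w j + \<nu> j"
    using assms by (auto simp: PP_def)
  have fu: "fsupp u" using assms by (simp add: PP_def)
  have "k * dotp u (xw m) = dotp (\<lambda>j. w j + \<nu> j) (xw m)"
    using dotp_smul[OF fu, of k] k(4) by simp
  also have "\<dots> = dotp w (xw m) + dotp \<nu> (xw m)"
    using k(2,3) by (intro dotp_add) (auto simp: NN_def intro: bnd_fsupp)
  also have "dotp w (xw m) = 0" using dotp_bnd[OF k(2)] xw(2)[OF assms(1)] by simp
  also have "dotp \<nu> (xw m) = 0" using k(3) xw(1)[OF assms(1)] by (simp add: NN_def)
  finally show ?thesis using k(1) by simp
qed

lemma rho_ker: assumes "wit m" "u \<in> PP (Suc m)" "dotp u (xw m) = 0" shows "u \<in> PP m"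
proof -
  obtain k w \<nu> where k: "k > 0" "w \<in> bnd (Suc m)" "\<nu> \<in> NN" "\<forall>j. k * u j = w j + \<nu> j"
    using assms by (auto simp: PP_def)
  have fu: "fsupp u" using assms by (simp add: PP_def)
  have "0 = k * dotp u (xw m)" using assms(3) by simp
  also have "\<dots> = dotp (\<lambda>j. w j + \<nu> j) (xw m)"
    using dotp_smul[OF fu, of k] k(4) by simp
  also have "\<dots> = dotp w (xw m) + dotp \<nu> (xw m)"
    using k(2,3) by (intro dotp_add) (auto simp: NN_def intro: bnd_fsupp)
  also have "dotp \<nu> (xw m) = 0" using k(3) xw(1)[OF assms(1)] by (simp add: NN_def)
  also have "dotp w (xw m) = (\<Sum>j<Suc m. w j * xw m j)" using dotp_bnd[OF k(2)] by simp
  also have "\<dots> = w m * xw m m" using xw(2)[OF assms(1)] by simp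
  finally have "w m = 0" using xw(3)[OF assms(1)] by simp
  have "\<forall>j\<ge>m. w j = 0"
  proof (intro allI impI)
    fix j assume "m \<le> j" then show "w j = 0" using k(2) \<open>w m = 0\<close> by (cases "j = m") (auto simp: bnd_def)
  qed
  then have "w \<in> bnd m" by (simp add: bnd_def)
  then show ?thesis unfolding PP_def using fu k by blast
qed

lemma wv_ex: "\<exists>w. w \<in> PP (Suc m) \<and> (\<forall>u\<in>PP (Suc m). \<exists>q. (\<lambda>j. u j - q * w j) \<in> PP m) \<and>
   (\<forall>c. (\<lambda>j. c * w j) \<in> PP m \<longrightarrow> (\<forall>j. c * w j = 0))"
proof (cases "wit m")
  case False
  show ?thesis using PP_zero PP_inactive[OF False]
    by (intro exI[of _ "\<lambda>j. 0"]) auto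
next
  case True
  define em where "em = (\<lambda>j::nat. if j = m then 1 else (0::int))"
  have emP: "em \<in> PP (Suc m)" by (rule bnd_PP) (auto simp: bnd_def em_def)
  have emb: "em \<in> bnd (Suc m)" by (auto simp: bnd_def em_def)
  have "dotp em (xw m) = xw m m" using dotp_bnd[OF emb] by (simp add: em_def)
  define G where "G = (\<lambda>u. dotp u (xw m)) ` PP (Suc m)"
  have g: "xw m m \<in> G" using emP \<open>dotp em (xw m) = xw m m\<close> unfolding G_def by force
  have cl: "\<And>a b c. a \<in> G \<Longrightarrow> b \<in> G \<Longrightarrow> a + c * b \<in> G"
  proof -
    fix a b c assume "a \<in> G" "b \<in> G"
    then obtain ua ub where "ua \<in> PP (Suc m)" "ub \<in> PP (Suc m)" "a = dotp ua (xw m)" "b = dotp ub (xw m)"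
      by (auto simp: G_def)
    then show "a + c * b \<in> G" unfolding G_def
      by (intro image_eqI[of _ _ "\<lambda>j. ua j + c * ub j"]) (auto simp: dotp_lin PP_fsupp intro: PP_lin)
  qed
  obtain d where d: "d > 0" "d \<in> G" "\<forall>y\<in>G. d dvd y"
    using int_subgroup[OF g xw(3)[OF True] cl] by blast
  then obtain w where w: "w \<in> PP (Suc m)" "dotp w (xw m) = d" by (auto simp: G_def)
  have fw: "fsupp w" using w(1) by (rule PP_fsupp)
  show ?thesis
  proof (intro exI[of _ w] conjI ballI allI impI)
    show "w \<in> PP (Suc m)" by (rule w(1))
  next
    fix u assume u: "u \<in> PP (Suc m)"
    then have "d dvd dotp u (xw m)" using d(3) by (auto simp: G_def)
    define q where "q = dotp u (xw m) div d"
    have "(\<lambda>j. u j + (- q) * w j) \<in> PP (Suc m)" by (rule PP_lin[OF u w(1)])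
    moreover have "dotp (\<lambda>j. u j + (- q) * w j) (xw m) = 0"
    proof -
      obtain e where e: "dotp u (xw m) = d * e" using \<open>d dvd dotp u (xw m)\<close> by (auto elim: dvdE)
      have qe: "q = e" using d(1) by (simp add: q_def e)
      have "dotp (\<lambda>j. u j + (- q) * w j) (xw m) = dotp u (xw m) + (- q) * dotp w (xw m)"
        by (rule dotp_lin[OF PP_fsupp[OF u] fw])
      then show ?thesis using w(2) e qe by simp
    qed
    ultimately have "(\<lambda>j. u j + (- q) * w j) \<in> PP m" by (rule rho_ker[OF True])
    then show "\<exists>q. (\<lambda>j. u j - q * w j) \<in> PP m" by (intro exI[of _ q]) simp
  next
    fix c j assume "(\<lambda>j. c * w j) \<in> PP m"
    then have "dotp (\<lambda>j. c * w j) (xw m) = 0" by (rule rho_PP[OF True])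
    then have "c * d = 0" using dotp_smul[OF fw] w(2) by simp
    then show "c * w j = 0" using d(1) by simp
  qed
qed

definition wv where "wv m = (SOME w. w \<in> PP (Suc m) \<and> (\<forall>u\<in>PP (Suc m). \<exists>q. (\<lambda>j. u j - q * w j) \<in> PP m) \<and>
   (\<forall>c. (\<lambda>j. c * w j) \<in> PP m \<longrightarrow> (\<forall>j. c * w j = 0)))"

lemma wv: "wv m \<in> PP (Suc m)" "u \<in> PP (Suc m) \<Longrightarrow> \<exists>q. (\<lambda>j. u j - q * wv m j) \<in> PP m"
   "(\<lambda>j. c * wv m j) \<in> PP m \<Longrightarrow> c * wv m j = 0"
  using someI_ex[OF wv_ex[of m]] unfolding wv_def[symmetric] by blast+

lemma decompW: "u \<in> PP M \<Longrightarrow> \<exists>b. (\<lambda>j. u j - (\<Sum>n<M. b n * wv n j)) \<in> NN"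
proof (induction M arbitrary: u)
  case 0 then show ?case using PP0 by simp
next
  case (Suc M)
  obtain q where q: "(\<lambda>j. u j - q * wv M j) \<in> PP M" using wv(2)[OF Suc.prems] by blast
  then obtain b where b: "(\<lambda>j. (u j - q * wv M j) - (\<Sum>n<M. b n * wv n j)) \<in> NN"
    using Suc.IH by blast
  have s: "\<And>j. (\<Sum>n<Suc M. (b(M := q)) n * wv n j) = (\<Sum>n<M. b n * wv n j) + q * wv M j"
    by simp
  show ?case using b by (intro exI[of _ "b(M := q)"]) (simp only: s, simp add: algebra_simps)
qed

lemma uniqW: "(\<lambda>j. \<Sum>n<M. b n * wv n j) \<in> NN \<Longrightarrow> \<forall>n<M. \<forall>j. b n * wv n j = 0"
proof (induction M)
  case 0 then show ?case by simp
next
  case (Suc M)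
  have S': "(\<lambda>j. \<Sum>n<M. b n * wv n j) \<in> PP M"
    by (rule PP_sum) (rule PP_mono[OF _ wv(1)], simp)
  have S: "(\<lambda>j. \<Sum>n<Suc M. b n * wv n j) \<in> PP M" using Suc.prems by (rule NN_PP)
  have "(\<lambda>j. (\<Sum>n<Suc M. b n * wv n j) + (-1) * (\<Sum>n<M. b n * wv n j)) \<in> PP M"
    by (rule PP_lin[OF S S'])
  then have "(\<lambda>j. b M * wv M j) \<in> PP M" by simp
  then have z: "\<And>j. b M * wv M j = 0" by (rule wv(3))
  have "(\<lambda>j. \<Sum>n<M. b n * wv n j) = (\<lambda>j. \<Sum>n<Suc M. b n * wv n j)"
  proof (rule ext)
    fix j show "(\<Sum>n<M. b n * wv n j) = (\<Sum>n<Suc M. b n * wv n j)" using z[of j] by simp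
  qed
  then have "(\<lambda>j. \<Sum>n<M. b n * wv n j) \<in> NN" using Suc.prems by simp
  then have "\<forall>n<M. \<forall>j. b n * wv n j = 0" by (rule Suc.IH)
  then show ?case using z less_Suc_eq by auto
qed

end

lemma fsupp_sum: "(\<And>n. n < (M::nat) \<Longrightarrow> fsupp (g n)) \<Longrightarrow> fsupp (\<lambda>j. \<Sum>n<M. c n * g n j)"
proof (induction M)
  case 0 then show ?case by (simp add: fsupp_def bnd_def)
next
  case (Suc M)
  then have "fsupp (\<lambda>j. (\<Sum>n<M. c n * g n j) + c M * g M j)" by (intro fsupp_lin) auto
  then show ?case by simp
qed

lemma dotp_sum: "(\<And>n. n < (M::nat) \<Longrightarrow> fsupp (g n)) \<Longrightarrow>
   dotp (\<lambda>j. \<Sum>n<M. c n * g n j) x = (\<Sum>n<M. c n * dotp (g n) x)"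
proof (induction M)
  case 0 then show ?case by (simp add: dotp_def)
next
  case (Suc M)
  have "dotp (\<lambda>j. (\<Sum>n<M. c n * g n j) + c M * g M j) x = dotp (\<lambda>j. \<Sum>n<M. c n * g n j) x + c M * dotp (g M) x"
    using Suc.prems by (intro dotp_lin fsupp_sum) auto
  then show ?case using Suc by simp
qed

lemma sum_pad: "M1 \<le> M \<Longrightarrow> (\<Sum>n<M. (if n < M1 then f n else 0)) = (\<Sum>n<(M1::nat). f n)"
proof -
  assume "M1 \<le> M"
  then have "{..<M1} \<subseteq> {..<M}" by auto
  then have "(\<Sum>n<M. (if n < M1 then f n else 0)) = (\<Sum>n\<in>{..<M1}. (if n < M1 then f n else 0))"
    by (intro sum.mono_neutral_right) auto
  then show ?thesis by simp
qed

context rowsys begin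

lemma vv_ex: "\<exists>v. v \<in> NN \<and> v \<in> bnd (Suc m) \<and> (\<forall>u. u \<in> NN \<longrightarrow> u \<in> bnd (Suc m) \<longrightarrow> (\<exists>q. (\<lambda>j. u j - q * v j) \<in> bnd m)) \<and>
   (\<forall>c. (\<lambda>j. c * v j) \<in> bnd m \<longrightarrow> (\<forall>j. c * v j = 0))"
proof (cases "\<exists>u. u \<in> NN \<and> u \<in> bnd (Suc m) \<and> u m \<noteq> 0")
  case False
  have "\<forall>u. u \<in> NN \<longrightarrow> u \<in> bnd (Suc m) \<longrightarrow> u \<in> bnd m"
  proof (intro allI impI)
    fix u assume "u \<in> NN" "u \<in> bnd (Suc m)"
    then have "u m = 0" using False by blast
    have "\<forall>j\<ge>m. u j = 0"
    proof (intro allI impI)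
      fix j assume "m \<le> j" then show "u j = 0" using \<open>u \<in> bnd (Suc m)\<close> \<open>u m = 0\<close>
        by (cases "j = m") (auto simp: bnd_def)
    qed
    then show "u \<in> bnd m" by (simp add: bnd_def)
  qed
  then show ?thesis using NN_zero by (intro exI[of _ "\<lambda>j. 0"]) auto
next
  case True
  then obtain u0 where u0: "u0 \<in> NN" "u0 \<in> bnd (Suc m)" "u0 m \<noteq> 0" by blast
  define G where "G = {u m | u. u \<in> NN \<and> u \<in> bnd (Suc m)}"
  have g: "u0 m \<in> G" using u0 by (auto simp: G_def)
  have cl: "\<And>a b c. a \<in> G \<Longrightarrow> b \<in> G \<Longrightarrow> a + c * b \<in> G"
  proof -
    fix a b c assume "a \<in> G" "b \<in> G"
    then obtain ua ub where "ua \<in> NN" "ua \<in> bnd (Suc m)" "a = ua m" "ub \<in> NN" "ub \<in> bnd (Suc m)" "b = ub m"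
      by (auto simp: G_def)
    then show "a + c * b \<in> G" unfolding G_def
      by (intro CollectI exI[of _ "\<lambda>j. ua j + c * ub j"]) (auto intro: NN_lin bnd_lin)
  qed
  obtain d where d: "d > 0" "d \<in> G" "\<forall>y\<in>G. d dvd y" using int_subgroup[OF g u0(3) cl] by blast
  then obtain v where v: "v \<in> NN" "v \<in> bnd (Suc m)" "v m = d" by (auto simp: G_def)
  show ?thesis
  proof (intro exI[of _ v] conjI allI impI)
    show "v \<in> NN" "v \<in> bnd (Suc m)" using v by auto
  next
    fix u assume u: "u \<in> NN" "u \<in> bnd (Suc m)"
    then have "d dvd u m" using d(3) by (auto simp: G_def)
    then obtain e where e: "u m = d * e" by (auto elim: dvdE)
    have "(\<lambda>j. u j - e * v j) \<in> bnd m"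
    proof -
      have "\<forall>j\<ge>m. u j - e * v j = 0"
      proof (intro allI impI)
        fix j assume "m \<le> j"
        show "u j - e * v j = 0"
        proof (cases "j = m")
          case True then show ?thesis using e v(3) by simp
        next
          case False then have "Suc m \<le> j" using \<open>m \<le> j\<close> by simp
          then show ?thesis using u(2) v(2) by (simp add: bnd_def)
        qed
      qed
      then show ?thesis by (simp add: bnd_def)
    qed
    then show "\<exists>q. (\<lambda>j. u j - q * v j) \<in> bnd m" by blast
  next
    fix c j assume "(\<lambda>j. c * v j) \<in> bnd m"
    then have "c * v m = 0" by (simp add: bnd_def)
    then have "c = 0" using v(3) d(1) by simp
    then show "c * v j = 0" by simp
  qed
qed

definition vv where "vv m = (SOME v. v \<in> NN \<and> v \<in> bnd (Suc m) \<and> (\<forall>u. u \<in> NN \<longrightarrow> u \<in> bnd (Suc m) \<longrightarrow> (\<exists>q. (\<lambda>j. u j - q * v j) \<in> bnd m)) \<and>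
   (\<forall>c. (\<lambda>j. c * v j) \<in> bnd m \<longrightarrow> (\<forall>j. c * v j = 0)))"

lemma vv: "vv m \<in> NN" "vv m \<in> bnd (Suc m)"
  "u \<in> NN \<Longrightarrow> u \<in> bnd (Suc m) \<Longrightarrow> \<exists>q. (\<lambda>j. u j - q * vv m j) \<in> bnd m"
  "(\<lambda>j. c * vv m j) \<in> bnd m \<Longrightarrow> c * vv m j = 0"
  using someI_ex[OF vv_ex[of m]] unfolding vv_def[symmetric] by blast+

lemma decompN: "u \<in> NN \<Longrightarrow> u \<in> bnd M \<Longrightarrow> \<exists>\<alpha>. \<forall>j. u j = (\<Sum>n<M. \<alpha> n * vv n j)"
proof (induction M arbitrary: u)
  case 0 then show ?case by (simp add: bnd_def)
next
  case (Suc M)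
  obtain q where q: "(\<lambda>j. u j - q * vv M j) \<in> bnd M" using vv(3)[OF Suc.prems] by blast
  have "(\<lambda>j. u j + (-q) * vv M j) \<in> NN" using NN_lin[OF Suc.prems(1) vv(1)] .
  then have "(\<lambda>j. u j - q * vv M j) \<in> NN" by simp
  then obtain \<alpha> where \<alpha>: "\<forall>j. u j - q * vv M j = (\<Sum>n<M. \<alpha> n * vv n j)" using Suc.IH q by blast
  have s: "\<And>j. (\<Sum>n<Suc M. (\<alpha>(M := q)) n * vv n j) = (\<Sum>n<M. \<alpha> n * vv n j) + q * vv M j"
    by simp
  show ?case
  proof (intro exI[of _ "\<alpha>(M := q)"] allI)
    fix j show "u j = (\<Sum>n<Suc M. (\<alpha>(M := q)) n * vv n j)" unfolding s using \<alpha> by (simp add: algebra_simps)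
  qed
qed

lemma uniqN: "(\<forall>j. (\<Sum>n<M. \<alpha> n * vv n j) = 0) \<Longrightarrow> \<forall>n<M. \<forall>j. \<alpha> n * vv n j = 0"
proof (induction M)
  case 0 then show ?case by simp
next
  case (Suc M)
  have S': "(\<lambda>j. \<Sum>n<M. \<alpha> n * vv n j) \<in> bnd M"
    by (rule bnd_sum) (rule bnd_mono[OF _ vv(2)], simp)
  have "(\<lambda>j. (-1) * (\<Sum>n<M. \<alpha> n * vv n j)) \<in> bnd M" using S' by (auto simp: bnd_def)
  moreover have "\<And>j. \<alpha> M * vv M j = (-1) * (\<Sum>n<M. \<alpha> n * vv n j)"
  proof -
    fix j
    have "(\<Sum>n<M. \<alpha> n * vv n j) + \<alpha> M * vv M j = 0" using Suc.prems by simp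
    then show "\<alpha> M * vv M j = (-1) * (\<Sum>n<M. \<alpha> n * vv n j)" by linarith
  qed
  ultimately have "(\<lambda>j. \<alpha> M * vv M j) \<in> bnd M" by simp
  then have z: "\<And>j. \<alpha> M * vv M j = 0" by (rule vv(4))
  have "\<forall>j. (\<Sum>n<M. \<alpha> n * vv n j) = 0"
  proof
    fix j have "(\<Sum>n<M. \<alpha> n * vv n j) + \<alpha> M * vv M j = 0" using Suc.prems by simp
    then show "(\<Sum>n<M. \<alpha> n * vv n j) = 0" using z[of j] by simp
  qed
  then have "\<forall>n<M. \<forall>j. \<alpha> n * vv n j = 0" by (rule Suc.IH)
  then show ?case using z less_Suc_eq by auto
qed

lemma basis: assumes "fsupp u"
  shows "\<exists>M b \<alpha>. (\<forall>n\<ge>M. b n = 0 \<and> \<alpha> n = 0) \<and> (\<forall>j. u j = (\<Sum>n<M. b n * wv n j + \<alpha> n * vv n j))"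
proof -
  obtain M1 where M1: "u \<in> bnd M1" using assms by (auto simp: fsupp_def)
  obtain b where b: "(\<lambda>j. u j - (\<Sum>n<M1. b n * wv n j)) \<in> NN" using decompW[OF bnd_PP[OF M1]] by blast
  then obtain M2 where M2: "(\<lambda>j. u j - (\<Sum>n<M1. b n * wv n j)) \<in> bnd M2" by (auto simp: NN_def fsupp_def)
  obtain \<alpha> where \<alpha>: "\<forall>j. u j - (\<Sum>n<M1. b n * wv n j) = (\<Sum>n<M2. \<alpha> n * vv n j)"
    using decompN[OF b M2] by auto
  define M where "M = max M1 M2"
  define b' where "b' = (\<lambda>n. if n < M1 then b n else 0)"
  define \<alpha>' where "\<alpha>' = (\<lambda>n. if n < M2 then \<alpha> n else 0)"
  have "\<forall>j. u j = (\<Sum>n<M. b' n * wv n j + \<alpha>' n * vv n j)"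
  proof
    fix j
    have "(\<Sum>n<M. b' n * wv n j) = (\<Sum>n<M. (if n < M1 then b n * wv n j else 0))"
      by (rule sum.cong) (auto simp: b'_def)
    also have "\<dots> = (\<Sum>n<M1. b n * wv n j)" by (rule sum_pad) (simp add: M_def)
    finally have 1: "(\<Sum>n<M. b' n * wv n j) = (\<Sum>n<M1. b n * wv n j)" .
    have "(\<Sum>n<M. \<alpha>' n * vv n j) = (\<Sum>n<M. (if n < M2 then \<alpha> n * vv n j else 0))"
      by (rule sum.cong) (auto simp: \<alpha>'_def)
    also have "\<dots> = (\<Sum>n<M2. \<alpha> n * vv n j)" by (rule sum_pad) (simp add: M_def)
    finally have 2: "(\<Sum>n<M. \<alpha>' n * vv n j) = (\<Sum>n<M2. \<alpha> n * vv n j)" .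
    show "u j = (\<Sum>n<M. b' n * wv n j + \<alpha>' n * vv n j)"
      using \<alpha> 1 2 by (simp add: sum.distrib algebra_simps)
  qed
  moreover have "\<forall>n\<ge>M. b' n = 0 \<and> \<alpha>' n = 0" by (auto simp: M_def b'_def \<alpha>'_def)
  ultimately show ?thesis by blast
qed

lemma uniqB: assumes "\<forall>j. (\<Sum>n<M. b n * wv n j + \<alpha> n * vv n j) = 0"
  shows "\<forall>n<M. \<forall>j. \<alpha> n * vv n j = 0"
proof -
  have "(\<lambda>j. \<Sum>n<M. (- \<alpha> n) * vv n j) \<in> NN" by (rule NN_sum) (rule vv(1))
  moreover have "(\<lambda>j. \<Sum>n<M. (- \<alpha> n) * vv n j) = (\<lambda>j. \<Sum>n<M. b n * wv n j)"
  proof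
    fix j have "(\<Sum>n<M. b n * wv n j) + (\<Sum>n<M. \<alpha> n * vv n j) = 0" using assms by (simp add: sum.distrib)
    moreover have "(\<Sum>n<M. (- \<alpha> n) * vv n j) = - (\<Sum>n<M. \<alpha> n * vv n j)" by (simp add: sum_negf)
    ultimately show "(\<Sum>n<M. (- \<alpha> n) * vv n j) = (\<Sum>n<M. b n * wv n j)" by linarith
  qed
  ultimately have "(\<lambda>j. \<Sum>n<M. b n * wv n j) \<in> NN" by simp
  then have z: "\<forall>n<M. \<forall>j. b n * wv n j = 0" by (rule uniqW)
  have "\<forall>j. (\<Sum>n<M. \<alpha> n * vv n j) = 0"
  proof
    fix j
    have "(\<Sum>n<M. b n * wv n j) = 0" by (rule sum.neutral) (use z in auto)
    moreover have "(\<Sum>n<M. b n * wv n j) + (\<Sum>n<M. \<alpha> n * vv n j) = 0" using assms by (simp add: sum.distrib)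
    ultimately show "(\<Sum>n<M. \<alpha> n * vv n j) = 0" by simp
  qed
  then show ?thesis by (rule uniqN)
qed

end

definition ej :: "nat \<Rightarrow> nat \<Rightarrow> int" where "ej j = (\<lambda>i. if i = j then 1 else 0)"

context rowsys begin

definition cf where "cf j = (SOME p. (\<forall>n\<ge>fst p. fst (snd p) n = 0 \<and> snd (snd p) n = 0) \<and>
   (\<forall>i. ej j i = (\<Sum>n<fst p. fst (snd p) n * wv n i + snd (snd p) n * vv n i)))"
definition cM where "cM j = fst (cf j)"
definition cb where "cb j = fst (snd (cf j))"
definition ca where "ca j = snd (snd (cf j))"

lemma cf: "\<forall>n\<ge>cM j. cb j n = 0 \<and> ca j n = 0"
  "\<forall>i. ej j i = (\<Sum>n<cM j. cb j n * wv n i + ca j n * vv n i)"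
proof -
  have "fsupp (ej j)" by (auto simp: fsupp_def bnd_def ej_def intro!: exI[of _ "Suc j"])
  from basis[OF this] obtain M b \<alpha> where "(\<forall>n\<ge>M. b n = 0 \<and> \<alpha> n = 0) \<and> (\<forall>i. ej j i = (\<Sum>n<M. b n * wv n i + \<alpha> n * vv n i))"
    by blast
  then have "\<exists>p. (\<forall>n\<ge>fst p. fst (snd p) n = 0 \<and> snd (snd p) n = 0) \<and>
   (\<forall>i. ej j i = (\<Sum>n<fst p. fst (snd p) n * wv n i + snd (snd p) n * vv n i))"
    by (intro exI[of _ "(M, b, \<alpha>)"]) simp
  from someI_ex[OF this] show "\<forall>n\<ge>cM j. cb j n = 0 \<and> ca j n = 0"
    "\<forall>i. ej j i = (\<Sum>n<cM j. cb j n * wv n i + ca j n * vv n i)"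
    unfolding cf_def[symmetric] cM_def cb_def ca_def by auto
qed

lemma sum_ext_zero: "M \<le> B \<Longrightarrow> (\<forall>n\<ge>M. f n = 0) \<Longrightarrow> (\<Sum>n<B. f n) = (\<Sum>n<(M::nat). (f n :: int))"
  by (rule sum.mono_neutral_right) auto

lemma cf_pad: "cM j \<le> B \<Longrightarrow> ej j i = (\<Sum>n<B. cb j n * wv n i + ca j n * vv n i)"
  using cf(2)[of j] cf(1)[of j] by (subst sum_ext_zero[of "cM j" B]) auto

definition sig where "sig t = (\<lambda>j. \<Sum>a<cM j. ca j a * t a)"

lemma dual:
  assumes tz: "\<And>a. vv a = (\<lambda>j. 0) \<Longrightarrow> t a = 0"
  shows "dotp (vv b0) (sig t) = t b0"
proof -
  define B where "B = (\<Sum>j<Suc b0. cM j) + Suc b0"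
  have hB: "\<And>j. j < Suc b0 \<Longrightarrow> cM j \<le> B"
  proof -
    fix j assume "j < Suc b0"
    then have "cM j \<le> (\<Sum>j<Suc b0. cM j)" by (intro member_le_sum) auto
    then show "cM j \<le> B" by (simp add: B_def)
  qed
  have b0B: "b0 < B" by (simp add: B_def)
  define \<beta> where "\<beta> = (\<lambda>n. \<Sum>j<Suc b0. vv b0 j * cb j n)"
  define \<gamma> where "\<gamma> = (\<lambda>n. \<Sum>j<Suc b0. vv b0 j * ca j n)"
  have vbnd: "vv b0 \<in> bnd (Suc b0)" by (rule vv(2))
  have vb: "vv b0 i = (\<Sum>j<Suc b0. vv b0 j * ej j i)" for i
  proof -
    have "(\<Sum>j<Suc b0. vv b0 j * ej j i) = (\<Sum>j\<in>{..<Suc b0}. if i = j then vv b0 j else 0)"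
      by (rule sum.cong) (auto simp: ej_def)
    also have "\<dots> = (if i \<in> {..<Suc b0} then vv b0 i else 0)" by (rule sum.delta') simp
    also have "\<dots> = vv b0 i" using vbnd by (auto simp: bnd_def)
    finally show ?thesis by simp
  qed
  have expand: "vv b0 i = (\<Sum>n<B. \<beta> n * wv n i + \<gamma> n * vv n i)" for i
  proof -
    have "vv b0 i = (\<Sum>j<Suc b0. vv b0 j * (\<Sum>n<B. cb j n * wv n i + ca j n * vv n i))"
      unfolding vb[of i] using cf_pad[OF hB] by (intro sum.cong) auto
    also have "\<dots> = (\<Sum>j<Suc b0. \<Sum>n<B. vv b0 j * cb j n * wv n i + vv b0 j * ca j n * vv n i)"
      by (simp add: sum_distrib_left algebra_simps)
    also have "\<dots> = (\<Sum>n<B. \<Sum>j<Suc b0. vv b0 j * cb j n * wv n i + vv b0 j * ca j n * vv n i)"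
      by (rule sum.swap)
    also have "\<dots> = (\<Sum>n<B. \<beta> n * wv n i + \<gamma> n * vv n i)"
      by (rule sum.cong[OF refl]) (simp only: \<beta>_def \<gamma>_def sum.distrib sum_distrib_right)
    finally show ?thesis .
  qed
  have selfrep: "vv b0 i = (\<Sum>n<B. (if n = b0 then 1 else 0) * vv n i)" for i
  proof -
    have "(\<Sum>n<B. (if n = b0 then 1 else 0) * vv n i) = (\<Sum>n\<in>{..<B}. if n = b0 then vv n i else 0)"
      by (rule sum.cong) auto
    also have "\<dots> = vv b0 i" using b0B by (subst sum.delta) auto
    finally show ?thesis by simp
  qed
  have "\<forall>i. (\<Sum>n<B. \<beta> n * wv n i + (\<gamma> n - (if n = b0 then 1 else 0)) * vv n i) = 0"
  proof
    fix i
    have "(\<Sum>n<B. \<beta> n * wv n i + (\<gamma> n - (if n = b0 then 1 else 0)) * vv n i)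
        = (\<Sum>n<B. \<beta> n * wv n i + \<gamma> n * vv n i) - (\<Sum>n<B. (if n = b0 then 1 else 0) * vv n i)"
      by (simp add: sum_subtractf[symmetric] algebra_simps)
    then show "(\<Sum>n<B. \<beta> n * wv n i + (\<gamma> n - (if n = b0 then 1 else 0)) * vv n i) = 0"
      using expand[of i] selfrep[of i] by simp
  qed
  from uniqB[OF this] have u: "\<forall>n<B. \<forall>i. (\<gamma> n - (if n = b0 then 1 else 0)) * vv n i = 0" .
  have ga: "\<gamma> a * t a = (if a = b0 then 1 else 0) * t a" if "a < B" for a
  proof (cases "vv a = (\<lambda>j. 0)")
    case True then show ?thesis using tz by simp
  next
    case False
    then obtain i where "vv a i \<noteq> 0" by auto
    then have "\<gamma> a - (if a = b0 then 1 else 0) = 0" using u that by auto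
    then show ?thesis by simp
  qed
  have "dotp (vv b0) (sig t) = (\<Sum>j<Suc b0. vv b0 j * sig t j)" by (rule dotp_bnd[OF vbnd])
  also have "\<dots> = (\<Sum>j<Suc b0. vv b0 j * (\<Sum>a<B. ca j a * t a))"
  proof (rule sum.cong)
    fix j assume "j \<in> {..<Suc b0}"
    then have "(\<Sum>a<B. ca j a * t a) = (\<Sum>a<cM j. ca j a * t a)"
      using hB cf(1)[of j] by (intro sum_ext_zero) auto
    then show "vv b0 j * sig t j = vv b0 j * (\<Sum>a<B. ca j a * t a)" by (simp add: sig_def)
  qed simp
  also have "\<dots> = (\<Sum>j<Suc b0. \<Sum>a<B. vv b0 j * ca j a * t a)" by (simp add: sum_distrib_left algebra_simps)
  also have "\<dots> = (\<Sum>a<B. \<Sum>j<Suc b0. vv b0 j * ca j a * t a)" by (rule sum.swap)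
  also have "\<dots> = (\<Sum>a<B. \<gamma> a * t a)" by (rule sum.cong[OF refl]) (simp only: \<gamma>_def sum_distrib_right)
  also have "\<dots> = (\<Sum>a<B. (if a = b0 then 1 else 0) * t a)" using ga by (intro sum.cong) auto
  also have "\<dots> = (\<Sum>a\<in>{..<B}. if a = b0 then t a else 0)" by (rule sum.cong) auto
  also have "\<dots> = t b0" using b0B by (subst sum.delta) auto
  finally show ?thesis .
qed

lemma psi_ker: "(\<forall>a. dotp (vv a) x = 0) \<Longrightarrow> x \<in> KK"
proof -
  assume z: "\<forall>a. dotp (vv a) x = 0"
  have "dotp (r i) x = 0" for i
  proof -
    obtain M where M: "r i \<in> bnd M" using rfs[of i] by (auto simp: fsupp_def)
    obtain \<alpha> where \<alpha>: "\<forall>j. r i j = (\<Sum>n<M. \<alpha> n * vv n j)" using decompN[OF r_NN M] by blast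
    then have "r i = (\<lambda>j. \<Sum>n<M. \<alpha> n * vv n j)" by auto
    then have "dotp (r i) x = (\<Sum>n<M. \<alpha> n * dotp (vv n) x)"
      using dotp_sum[of M vv \<alpha> x] vv(1) by (simp add: NN_def)
    then show ?thesis using z by simp
  qed
  then show "x \<in> KK" by (simp add: KK_def)
qed

lemma psi_KK: "x \<in> KK \<Longrightarrow> dotp (vv a) x = 0"
  using vv(1)[of a] by (simp add: NN_def)

end

lemma cyl_nbhd:
  fixes U :: "('a \<Rightarrow> 'b::topological_space) set"
  assumes "open U" "x \<in> U"
  shows "\<exists>J. finite J \<and> (\<forall>y. (\<forall>i\<in>J. y i = x i) \<longrightarrow> y \<in> U)"
proof -
  have "openin (product_topology (\<lambda>i. euclidean) UNIV) U" using assms(1) by (simp add: open_fun_def)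
  from product_topology_open_contains_basis[OF this assms(2)]
  obtain X where H: "x \<in> (\<Pi>\<^sub>E i\<in>UNIV. X i)" "finite {i. X i \<noteq> UNIV}" "(\<Pi>\<^sub>E i\<in>UNIV. X i) \<subseteq> U"
    by auto
  show ?thesis
  proof (intro exI[of _ "{i. X i \<noteq> UNIV}"] conjI allI impI)
    show "finite {i. X i \<noteq> UNIV}" by (rule H(2))
    fix y assume y: "\<forall>i\<in>{i. X i \<noteq> UNIV}. y i = x i"
    have "y \<in> (\<Pi>\<^sub>E i\<in>UNIV. X i)"
    proof (simp add: PiE_iff, intro allI)
      fix i show "y i \<in> X i" using y H(1) by (cases "X i = UNIV") (auto simp: PiE_iff)
    qed
    then show "y \<in> U" using H(3) by blast
  qed
qed

lemma cont_fin:
  fixes h :: "('a \<Rightarrow> 'b::discrete_topology) \<Rightarrow> 'c::topological_space"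
  assumes "finite J" "\<And>p q. (\<forall>k\<in>J. p k = q k) \<Longrightarrow> h p = h q"
  shows "continuous_on S h"
proof -
  have "continuous_on UNIV h"
    unfolding continuous_on_open_vimage[OF open_UNIV]
  proof (intro allI impI)
    fix B :: "'c set" assume "open B"
    define C :: "('a \<Rightarrow> 'b) \<Rightarrow> ('a \<Rightarrow> 'b) set" where "C = (\<lambda>p. Pi\<^sub>E UNIV (\<lambda>k. if k \<in> J then {p k} else UNIV))"
    have "h -` B \<inter> UNIV = (\<Union>p\<in>h -` B. C p)"
    proof
      show "h -` B \<inter> UNIV \<subseteq> (\<Union>p\<in>h -` B. C p)" by (auto simp: C_def PiE_iff)
      show "(\<Union>p\<in>h -` B. C p) \<subseteq> h -` B \<inter> UNIV"
      proof
        fix q assume "q \<in> (\<Union>p\<in>h -` B. C p)"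
        then obtain p where p: "h p \<in> B" "q \<in> C p" by auto
        have "\<forall>k\<in>J. p k = q k"
        proof
          fix k assume "k \<in> J"
          have "q k \<in> (if k \<in> J then {p k} else UNIV)" using p(2) by (simp add: C_def PiE_iff)
          then show "p k = q k" using \<open>k \<in> J\<close> by simp
        qed
        then show "q \<in> h -` B \<inter> UNIV" using assms(2)[of p q] p(1) by simp
      qed
    qed
    moreover have "open (C p)" for p
      unfolding C_def
    proof (rule open_PiE)
      show "\<And>i. open (if i \<in> J then {p i} else UNIV)" by (simp add: open_discrete)
      have "{i. (if i \<in> J then {p i} else UNIV) \<noteq> UNIV} \<subseteq> J" by auto
      then show "finite {i. (if i \<in> J then {p i} else UNIV) \<noteq> UNIV}" using assms(1) finite_subset by blast
    qed
    ultimately have "open (\<Union>p\<in>h -` B. C p)" by (intro open_UN) auto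
    then show "open (h -` B \<inter> UNIV)" using \<open>h -` B \<inter> UNIV = (\<Union>p\<in>h -` B. C p)\<close> by simp
  qed
  then show ?thesis by (rule continuous_on_subset) simp
qed

lemma cont_fin_prod:
  fixes h :: "('a \<Rightarrow> 'b::discrete_topology) \<Rightarrow> ('d \<Rightarrow> 'c::topological_space)"
  assumes "\<And>i. \<exists>J. finite J \<and> (\<forall>p q. (\<forall>k\<in>J. p k = q k) \<longrightarrow> h p i = h q i)"
  shows "continuous_on S h"
proof (rule continuous_on_coordinatewise_then_product)
  fix i
  obtain J where "finite J" "\<forall>p q. (\<forall>k\<in>J. p k = q k) \<longrightarrow> h p i = h q i" using assms by blast
  then show "continuous_on S (\<lambda>x. h x i)" by (intro cont_fin[of J]) auto
qed

lemma QC: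
  fixes g :: "'a::topological_space \<Rightarrow> 'b::t2_space" and h :: "'b \<Rightarrow> 'c::topological_space"
  assumes "compact T" "continuous_on T g" "continuous_on T (\<lambda>x. h (g x))"
  shows "continuous_on (g ` T) h"
  unfolding continuous_on_closed_invariant
proof (intro allI impI)
  fix B :: "'c set" assume "closed B"
  then obtain A where A: "closed A" "A \<inter> T = (\<lambda>x. h (g x)) -` B \<inter> T"
    using assms(3) unfolding continuous_on_closed_invariant by blast
  have "compact (A \<inter> T)" using A(1) assms(1) by (rule closed_Int_compact)
  moreover have "continuous_on (A \<inter> T) g" using assms(2) by (rule continuous_on_subset) auto
  ultimately have "compact (g ` (A \<inter> T))" by (rule compact_continuous_image[rotated])
  then have "closed (g ` (A \<inter> T))" by (rule compact_imp_closed)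
  moreover have "g ` (A \<inter> T) \<inter> g ` T = h -` B \<inter> g ` T"
  proof
    show "g ` (A \<inter> T) \<inter> g ` T \<subseteq> h -` B \<inter> g ` T" using A(2) by blast
    show "h -` B \<inter> g ` T \<subseteq> g ` (A \<inter> T) \<inter> g ` T"
    proof
      fix y assume "y \<in> h -` B \<inter> g ` T"
      then obtain t where "t \<in> T" "y = g t" "h (g t) \<in> B" by auto
      then have "t \<in> A \<inter> T" using A(2) by blast
      then show "y \<in> g ` (A \<inter> T) \<inter> g ` T" using \<open>y = g t\<close> \<open>t \<in> T\<close> by blast
    qed
  qed
  ultimately show "\<exists>A. closed A \<and> A \<inter> g ` T = h -` B \<inter> g ` T" by blast
qed

definition S0 :: "cantor set" where "S0 = {p. \<forall>j k. p j \<and> p k \<longrightarrow> j = k}"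

lemma closed_S0: "closed S0"
proof -
  define Q where "Q = (\<lambda>jk::nat\<times>nat. (\<lambda>p::cantor. p (fst jk) \<and> p (snd jk)) -` {False})"
  have cl: "closed (Q jk)" for jk
  proof -
    define h where "h = (\<lambda>p::cantor. p (fst jk) \<and> p (snd jk))"
    have "continuous_on UNIV h" unfolding h_def
      by (rule cont_fin[of "{fst jk, snd jk}"]) simp_all
    then have "\<forall>B. closed B \<longrightarrow> closed (h -` B \<inter> UNIV)"
      by (simp only: continuous_on_closed_vimage[OF closed_UNIV])
    then have "closed (h -` {False} \<inter> UNIV)" by simp
    then show ?thesis by (simp add: Q_def h_def)
  qed
  have eq: "S0 = (\<Inter>jk\<in>{jk. fst jk \<noteq> snd jk}. Q jk)"
  proof (rule set_eqI)
    fix p :: cantor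
    show "p \<in> S0 \<longleftrightarrow> p \<in> (\<Inter>jk\<in>{jk. fst jk \<noteq> snd jk}. Q jk)"
    proof
      assume a: "p \<in> S0"
      show "p \<in> (\<Inter>jk\<in>{jk. fst jk \<noteq> snd jk}. Q jk)"
      proof (rule INT_I)
        fix jk :: "nat \<times> nat" assume "jk \<in> {jk. fst jk \<noteq> snd jk}"
        then have "fst jk \<noteq> snd jk" by simp
        then have "\<not> (p (fst jk) \<and> p (snd jk))" using a unfolding S0_def by blast
        then show "p \<in> Q jk" unfolding Q_def by simp
      qed
    next
      assume a: "p \<in> (\<Inter>jk\<in>{jk. fst jk \<noteq> snd jk}. Q jk)"
      show "p \<in> S0" unfolding S0_def
      proof (intro CollectI allI impI)
        fix j k assume jk: "p j \<and> p k"
        show "j = k"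
        proof (rule ccontr)
          assume "j \<noteq> k"
          then have "(j, k) \<in> {jk. fst jk \<noteq> snd jk}" by simp
          then have "p \<in> Q (j, k)" using a by (rule INT_D[rotated])
          then show False using jk unfolding Q_def by simp
        qed
      qed
    qed
  qed
  have "closed (\<Inter>jk\<in>{jk. fst jk \<noteq> snd jk}. Q jk)" by (rule closed_INT) (simp add: cl)
  then show ?thesis using eq by simp
qed

lemma cantor_compact: "compact (UNIV :: cantor set)"
proof -
  have b: "compact_space (euclidean :: bool topology)" by (simp add: finite_imp_compact compact_space_def)
  have "compact_space (product_topology (\<lambda>i::nat. (euclidean :: bool topology)) UNIV)"
    using b compact_space_product_topology by blast
  then show ?thesis
    by (simp add: euclidean_product_topology compact_space_def)
qed

lemma closed_compact_cantor: "closed (S :: cantor set) \<Longrightarrow> compact S"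
proof -
  assume "closed S"
  then have "compact (S \<inter> UNIV)" using closed_Int_compact[OF _ cantor_compact] by blast
  then show "compact S" by simp
qed


lemma Hausdorff_bool: "Hausdorff_space (euclidean :: bool topology)"
  unfolding Hausdorff_space_def
  by (intro allI impI exI[of _ "{x}" for x]) (auto simp: open_discrete disjnt_def)

lemma compact_closed_cantor: "compact (S :: cantor set) \<Longrightarrow> closed S"
proof -
  assume "compact S"
  have H: "Hausdorff_space (product_topology (\<lambda>i::nat. (euclidean :: bool topology)) UNIV)"
    using Hausdorff_bool by (simp add: Hausdorff_space_product_topology)
  have "compactin (product_topology (\<lambda>i::nat. (euclidean :: bool topology)) UNIV) S"
    using \<open>compact S\<close> by (simp add: euclidean_product_topology)
  then have "closedin (product_topology (\<lambda>i::nat. (euclidean :: bool topology)) UNIV) S"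
    by (rule compactin_imp_closedin[OF H])
  then show "closed S" by (simp add: euclidean_product_topology)
qed

lemma closed_sing_cantor: "closed {x :: cantor}"
  by (rule compact_closed_cantor) simp

lemma QCc:
  fixes g :: "'a::topological_space \<Rightarrow> cantor" and h :: "cantor \<Rightarrow> 'c::topological_space"
  assumes "compact T" "continuous_on T g" "continuous_on T (\<lambda>x. h (g x))"
  shows "continuous_on (g ` T) h"
  unfolding continuous_on_closed_invariant
proof (intro allI impI)
  fix B :: "'c set" assume "closed B"
  then obtain A where A: "closed A" "A \<inter> T = (\<lambda>x. h (g x)) -` B \<inter> T"
    using assms(3) unfolding continuous_on_closed_invariant by blast
  have "compact (A \<inter> T)" using A(1) assms(1) by (rule closed_Int_compact)
  moreover have "continuous_on (A \<inter> T) g" using assms(2) by (rule continuous_on_subset) auto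
  ultimately have "compact (g ` (A \<inter> T))" by (rule compact_continuous_image[rotated])
  then have "closed (g ` (A \<inter> T))" by (rule compact_closed_cantor)
  moreover have "g ` (A \<inter> T) \<inter> g ` T = h -` B \<inter> g ` T"
  proof
    show "g ` (A \<inter> T) \<inter> g ` T \<subseteq> h -` B \<inter> g ` T" using A(2) by blast
    show "h -` B \<inter> g ` T \<subseteq> g ` (A \<inter> T) \<inter> g ` T"
    proof
      fix y assume "y \<in> h -` B \<inter> g ` T"
      then obtain t where "t \<in> T" "y = g t" "h (g t) \<in> B" by auto
      then have "t \<in> A \<inter> T" using A(2) by blast
      then show "y \<in> g ` (A \<inter> T) \<inter> g ` T" using \<open>y = g t\<close> \<open>t \<in> T\<close> by blast
    qed
  qed
  ultimately show "\<exists>A. closed A \<and> A \<inter> g ` T = h -` B \<inter> g ` T" by blast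
qed

definition c0 :: cantor where "c0 = (\<lambda>_. False)"
definition cs :: "(nat \<Rightarrow> int) \<Rightarrow> cantor \<Rightarrow> nat \<Rightarrow> int" where
  "cs a = (\<lambda>y. if y \<in> {c0} then a else undefined)"

lemma least_agree:
  fixes p q :: "nat \<Rightarrow> bool"
  assumes "\<forall>k\<le>j. p k = q k" "\<exists>n\<le>j. p n"
  shows "(LEAST n. p n) = (LEAST n. q n)"
proof -
  define m where "m = (LEAST n. p n)"
  obtain n0 where n0: "n0 \<le> j" "p n0" using assms(2) by blast
  have pm: "p m" unfolding m_def using n0(2) by (rule LeastI)
  have mle: "m \<le> n0" unfolding m_def using n0(2) by (rule Least_le)
  have "(LEAST n. q n) = m"
  proof (rule Least_equality)
    show "q m" using pm assms(1) mle n0(1) by auto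
  next
    fix y assume qy: "q y"
    show "m \<le> y"
    proof (rule ccontr)
      assume "\<not> m \<le> y"
      then have "y < m" by simp
      then have "p y" using qy assms(1) mle n0(1) by auto
      then have "m \<le> y" unfolding m_def by (rule Least_le)
      then show False using \<open>y < m\<close> by simp
    qed
  qed
  then show ?thesis by (simp add: m_def)
qed

locale cendo =
  fixes f :: "cantor set \<Rightarrow> (cantor \<Rightarrow> nat \<Rightarrow> int) \<Rightarrow> (cantor \<Rightarrow> nat \<Rightarrow> int)"
  assumes ce: "condensed_endo f"
begin

lemma ce_sec: "closed S \<Longrightarrow> u \<in> sec S \<Longrightarrow> f S u \<in> sec S"
  using ce by (simp add: condensed_endo_def light_profinite_def)

lemma ce_add: "closed S \<Longrightarrow> u \<in> sec S \<Longrightarrow> v \<in> sec S \<Longrightarrow> f S (sadd S u v) = sadd S (f S u) (f S v)"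
  using ce by (simp add: condensed_endo_def light_profinite_def)

lemma ce_nat: assumes "closed S" "closed T" "g \<in> cmap T S" "u \<in> sec S" shows "f T (pull T g u) = pull T g (f S u)"
proof -
  have h: "\<forall>S T g. closed S \<longrightarrow> closed T \<longrightarrow> g \<in> cmap T S \<longrightarrow> (\<forall>u\<in>sec S. f T (pull T g u) = pull T g (f S u))"
    using ce by (simp add: condensed_endo_def light_profinite_def)
  have "\<forall>u\<in>sec S. f T (pull T g u) = pull T g (f S u)" using h assms(1-3) by blast
  then show ?thesis using assms(4) by blast
qed

definition FF where "FF a = f {c0} (cs a) c0"

lemma cs_sec: "cs a \<in> sec {c0}"
  by (simp add: sec_def cs_def)

lemma pt: assumes "closed S" "u \<in> sec S" "x \<in> S" shows "f S u x = FF (u x)"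
proof -
  have g: "(\<lambda>_. x) \<in> cmap {c0} S" using assms(3) by (simp add: cmap_def)
  have e: "pull {c0} (\<lambda>_. x) u = cs (u x)" by (simp add: pull_def cs_def)
  have "f {c0} (pull {c0} (\<lambda>_. x) u) = pull {c0} (\<lambda>_. x) (f S u)"
    by (rule ce_nat[OF assms(1) closed_sing_cantor g assms(2)])
  then have "f {c0} (cs (u x)) c0 = pull {c0} (\<lambda>_. x) (f S u) c0" unfolding e by simp
  then show ?thesis by (simp add: FF_def pull_def)
qed

lemma FF_add: "FF (\<lambda>i. a i + b i) = (\<lambda>i. FF a i + FF b i)"
proof -
  have e: "sadd {c0} (cs a) (cs b) = cs (\<lambda>i. a i + b i)" by (auto simp: sadd_def cs_def)
  have "f {c0} (sadd {c0} (cs a) (cs b)) = sadd {c0} (f {c0} (cs a)) (f {c0} (cs b))"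
    by (rule ce_add[OF closed_sing_cantor cs_sec cs_sec])
  then have "f {c0} (cs (\<lambda>i. a i + b i)) c0 = sadd {c0} (f {c0} (cs a)) (f {c0} (cs b)) c0"
    unfolding e by simp
  then show ?thesis by (simp add: FF_def sadd_def)
qed

lemma FF_zero: "FF (\<lambda>i. 0) = (\<lambda>i. 0)"
proof -
  have h: "FF (\<lambda>i. 0) = (\<lambda>i. FF (\<lambda>i. 0) i + FF (\<lambda>i. 0) i)" using FF_add[of "\<lambda>i. 0" "\<lambda>i. 0"] by simp
  show ?thesis
  proof (rule ext)
    fix i from fun_cong[OF h, of i] show "FF (\<lambda>i. 0) i = 0" by simp
  qed
qed

lemma FF_nat: "FF (\<lambda>j. int n * a j) = (\<lambda>i. int n * FF a i)"
proof (induction n)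
  case 0 then show ?case using FF_zero by simp
next
  case (Suc n)
  have "FF (\<lambda>j. int (Suc n) * a j) = FF (\<lambda>j. int n * a j + a j)" by (simp add: algebra_simps)
  also have "\<dots> = (\<lambda>i. FF (\<lambda>j. int n * a j) i + FF a i)" by (rule FF_add)
  also have "\<dots> = (\<lambda>i. int (Suc n) * FF a i)" using Suc by (simp add: algebra_simps)
  finally show ?case .
qed

lemma FF_neg: "FF (\<lambda>j. - a j) = (\<lambda>i. - FF a i)"
proof -
  have "FF (\<lambda>j. a j + - a j) = (\<lambda>i. FF a i + FF (\<lambda>j. - a j) i)" by (rule FF_add)
  then have "(\<lambda>i. FF a i + FF (\<lambda>j. - a j) i) = (\<lambda>i. 0)" using FF_zero by simp
  show ?thesis
  proof (rule ext)
    fix i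
    have "FF a i + FF (\<lambda>j. - a j) i = 0" using fun_cong[OF \<open>(\<lambda>i. FF a i + FF (\<lambda>j. - a j) i) = (\<lambda>i. 0)\<close>, of i] by simp
    then show "FF (\<lambda>j. - a j) i = - FF a i" by linarith
  qed
qed

lemma FF_smul: "FF (\<lambda>j. c * a j) = (\<lambda>i. c * FF a i)"
proof (cases "c \<ge> 0")
  case True
  then have "c = int (nat c)" by simp
  then show ?thesis using FF_nat[of "nat c" a] by simp
next
  case False
  define n where "n = nat (- c)"
  have n: "c = - int n" using False by (simp add: n_def)
  have "FF (\<lambda>j. c * a j) = FF (\<lambda>j. - (int n * a j))" by (simp add: n)
  also have "\<dots> = (\<lambda>i. - FF (\<lambda>j. int n * a j) i)" by (rule FF_neg)
  also have "\<dots> = (\<lambda>i. c * FF a i)" by (simp add: FF_nat n)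
  finally show ?thesis .
qed

end

context cendo begin

lemma RF: "\<exists>M. \<forall>x. (\<forall>j<M. x j = 0) \<longrightarrow> FF x i = 0"
proof (rule ccontr)
  assume "\<not> ?thesis"
  then have "\<forall>M. \<exists>x. (\<forall>j<M. x j = 0) \<and> FF x i \<noteq> 0" by (simp add: not_ex)
  from choice[OF this] obtain xs where xs0: "\<forall>M. (\<forall>j<M. xs M j = 0) \<and> FF (xs M) i \<noteq> 0" ..
  have xs: "(\<forall>j<M. xs M j = 0) \<and> FF (xs M) i \<noteq> 0" for M using xs0 by (rule spec)
  define U where "U = (\<lambda>p::cantor. \<lambda>j. if \<exists>n\<le>j. p n then xs (LEAST n. p n) j else 0)"
  define u where "u = (\<lambda>p. if p \<in> S0 then U p else undefined)"
  have Ucont: "continuous_on S0 U"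
  proof (rule cont_fin_prod)
    fix j
    show "\<exists>J. finite J \<and> (\<forall>p q. (\<forall>k\<in>J. p k = q k) \<longrightarrow> U p j = U q j)"
    proof (intro exI[of _ "{..j}"] conjI allI impI)
      fix p q :: cantor assume a: "\<forall>k\<in>{..j}. p k = q k"
      then have a': "\<forall>k\<le>j. p k = q k" by auto
      show "U p j = U q j"
      proof (cases "\<exists>n\<le>j. p n")
        case True
        then have "\<exists>n\<le>j. q n" using a' by auto
        moreover have "(LEAST n. p n) = (LEAST n. q n)" by (rule least_agree[OF a' True])
        ultimately show ?thesis using True by (simp add: U_def)
      next
        case False
        then have "\<not> (\<exists>n\<le>j. q n)" using a' by auto
        then show ?thesis using False unfolding U_def by auto
      qed
    qed simp
  qed
  have usec: "u \<in> sec S0"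
  proof -
    have "continuous_on S0 u" using Ucont by (rule continuous_on_eq) (simp add: u_def)
    moreover have "\<forall>x. x \<notin> S0 \<longrightarrow> u x = undefined" by (simp add: u_def)
    ultimately show ?thesis unfolding sec_def by blast
  qed
  have fsec: "f S0 u \<in> sec S0" by (rule ce_sec[OF closed_S0 usec])
  have Gcont: "continuous_on S0 (\<lambda>p. f S0 u p i)"
  proof (rule continuous_on_product_then_coordinatewise)
    show "continuous_on S0 (f S0 u)" using fsec by (simp add: sec_def)
  qed
  have Geq: "f S0 u p i = FF (U p) i" if "p \<in> S0" for p
  proof -
    have "f S0 u p = FF (u p)" by (rule pt[OF closed_S0 usec that])
    moreover have "u p = U p" using that by (simp add: u_def)
    ultimately show ?thesis by simp
  qed
  have c0S: "c0 \<in> S0" by (simp add: S0_def c0_def)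
  have Uc0: "U c0 = (\<lambda>j. 0)" by (simp add: U_def c0_def)
  have G0: "f S0 u c0 i = 0" using Geq[OF c0S] Uc0 FF_zero by simp
  have h: "\<forall>B. open B \<longrightarrow> (\<exists>A. open A \<and> A \<inter> S0 = (\<lambda>p. f S0 u p i) -` B \<inter> S0)"
    using Gcont by (simp only: continuous_on_open_invariant)
  have o0: "open ({0}::int set)" by (rule open_discrete)
  obtain A where A: "open A" "A \<inter> S0 = (\<lambda>p. f S0 u p i) -` {0} \<inter> S0"
    using h[rule_format, OF o0] by blast
  have "c0 \<in> (\<lambda>p. f S0 u p i) -` {0} \<inter> S0" using c0S G0 by simp
  then have "c0 \<in> A \<inter> S0" using A(2) by simp
  then have "c0 \<in> A" by simp
  then obtain J where J: "finite J" "\<forall>y. (\<forall>k\<in>J. y k = c0 k) \<longrightarrow> y \<in> A"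
    using cyl_nbhd[OF A(1)] by blast
  define N where "N = Suc (Max (insert 0 J))"
  have JN: "\<forall>k\<in>J. k < N"
  proof
    fix k assume "k \<in> J"
    then have "k \<le> Max (insert 0 J)" using J(1) by simp
    then show "k < N" by (simp add: N_def)
  qed
  define pN where "pN = (\<lambda>k::nat. k = N)"
  have pNS: "pN \<in> S0" by (simp add: S0_def pN_def)
  have "\<forall>k\<in>J. pN k = c0 k" using JN by (auto simp: pN_def c0_def)
  then have "pN \<in> A" using J(2) by blast
  then have "pN \<in> A \<inter> S0" using pNS by simp
  then have "pN \<in> (\<lambda>p. f S0 u p i) -` {0} \<inter> S0" using A(2) by simp
  then have "f S0 u pN i = 0" by simp
  moreover have "U pN = xs N"
  proof (rule ext)
    fix j
    show "U pN j = xs N j"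
    proof (cases "N \<le> j")
      case True
      then have ex: "\<exists>n\<le>j. pN n" by (auto simp: pN_def)
      have "(LEAST n. pN n) = N" unfolding pN_def by (rule Least_equality) auto
      then show ?thesis using ex by (simp add: U_def)
    next
      case False
      then have "\<not> (\<exists>n\<le>j. pN n)" by (auto simp: pN_def)
      moreover have "xs N j = 0" using xs[of N] False by simp
      ultimately show ?thesis unfolding U_def by auto
    qed
  qed
  ultimately have "FF (xs N) i = 0" using Geq[OF pNS] by simp
  then show False using xs[of N] by simp
qed

definition MM where "MM i = (SOME M. \<forall>x. (\<forall>j<M. x j = 0) \<longrightarrow> FF x i = 0)"

lemma MM: "(\<forall>j<MM i. x j = 0) \<Longrightarrow> FF x i = 0"
  using someI_ex[OF RF[of i]] unfolding MM_def[symmetric] by blast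

definition rr where "rr i = (\<lambda>j. if j < MM i then FF (ej j) i else 0)"

lemma rr_bnd: "rr i \<in> bnd (MM i)" by (simp add: bnd_def rr_def)

lemma FF_bnd: "u \<in> bnd M \<Longrightarrow> FF u i = (\<Sum>j<M. u j * FF (ej j) i)"
proof (induction M arbitrary: u)
  case 0
  then have "u = (\<lambda>j. 0)" by (auto simp: bnd_def)
  then show ?case using FF_zero by simp
next
  case (Suc M)
  define u' where "u' = u(M := 0)"
  have u'b: "u' \<in> bnd M" using Suc.prems by (auto simp: bnd_def u'_def)
  have ue: "u = (\<lambda>j. u' j + u M * ej M j)" by (auto simp: u'_def ej_def)
  have "FF u i = FF u' i + FF (\<lambda>j. u M * ej M j) i"
    by (subst ue) (simp add: FF_add)
  also have "FF (\<lambda>j. u M * ej M j) i = u M * FF (ej M) i" by (simp add: FF_smul)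
  also have "FF u' i = (\<Sum>j<M. u' j * FF (ej j) i)" by (rule Suc.IH[OF u'b])
  also have "\<dots> = (\<Sum>j<M. u j * FF (ej j) i)" by (rule sum.cong) (auto simp: u'_def)
  finally show ?case by simp
qed

lemma FF_dot: "FF x i = dotp (rr i) x"
proof -
  define M where "M = MM i"
  define xl where "xl = (\<lambda>j. if j < M then x j else 0)"
  define xh where "xh = (\<lambda>j. if j < M then 0 else x j)"
  have xe: "x = (\<lambda>j. xl j + xh j)" by (auto simp: xl_def xh_def)
  have "FF x i = FF xl i + FF xh i" by (subst xe) (simp add: FF_add)
  also have "FF xh i = 0" unfolding M_def by (rule MM) (simp add: xh_def M_def)
  also have "FF xl i = (\<Sum>j<M. xl j * FF (ej j) i)" by (rule FF_bnd) (simp add: bnd_def xl_def)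
  also have "\<dots> = (\<Sum>j<M. rr i j * x j)" by (rule sum.cong) (auto simp: xl_def rr_def M_def)
  also have "\<dots> = dotp (rr i) x" using dotp_bnd[OF rr_bnd] by (simp add: M_def)
  finally show ?thesis by simp
qed

lemma rows: "rowsys rr"
  by unfold_locales (auto simp: fsupp_def intro: rr_bnd)

end

sublocale cendo \<subseteq> rowsys rr by (rule rows)

context cendo begin

definition Psi where "Psi x = (\<lambda>a. dotp (vv a) x)"
definition Phi where "Phi y = Psi (SOME x. FF x = y)"
definition phi where "phi S u = (\<lambda>p. if p \<in> S then Phi (u p) else undefined)"
definition II where "II = {a. vv a \<noteq> (\<lambda>j. 0)}"

lemma KK_iff: "x \<in> KK \<longleftrightarrow> FF x = (\<lambda>i. 0)"
proof -
  have "x \<in> KK \<longleftrightarrow> (\<forall>i. FF x i = 0)" by (simp add: KK_def FF_dot)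
  then show ?thesis by (simp add: fun_eq_iff)
qed

lemma FF_eq_iff: "FF x = FF x' \<longleftrightarrow> Psi x = Psi x'"
proof -
  define d where "d = (\<lambda>j. x j + (-1) * x' j)"
  have Fd1: "FF d = (\<lambda>i. FF x i + FF (\<lambda>j. (-1) * x' j) i)" unfolding d_def by (rule FF_add)
  have Fd2: "FF (\<lambda>j. (-1) * x' j) = (\<lambda>i. (-1) * FF x' i)" by (rule FF_smul)
  have Fd: "FF d = (\<lambda>i. FF x i - FF x' i)" using Fd1 Fd2 by simp
  have Pd: "Psi d = (\<lambda>a. Psi x a - Psi x' a)"
  proof (rule ext)
    fix a
    have "Psi d a = Psi x a + (-1) * Psi x' a" unfolding Psi_def d_def by (rule dotp_lin2)
    then show "Psi d a = Psi x a - Psi x' a" by simp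
  qed
  have "FF x = FF x' \<longleftrightarrow> FF d = (\<lambda>i. 0)"
    unfolding Fd by (auto simp: fun_eq_iff)
  also have "\<dots> \<longleftrightarrow> d \<in> KK" by (simp add: KK_iff)
  also have "\<dots> \<longleftrightarrow> Psi d = (\<lambda>a. 0)"
    using psi_ker[of d] psi_KK[of d] by (auto simp: Psi_def fun_eq_iff)
  also have "\<dots> \<longleftrightarrow> Psi x = Psi x'" unfolding Pd by (auto simp: fun_eq_iff)
  finally show ?thesis .
qed

lemma Phi_FF: "Phi (FF x) = Psi x"
proof -
  have "\<exists>x'. FF x' = FF x" by blast
  then have "FF (SOME x'. FF x' = FF x) = FF x" by (rule someI_ex)
  then show ?thesis unfolding Phi_def using FF_eq_iff by blast
qed

lemma Psi_out: "a \<notin> II \<Longrightarrow> Psi x a = 0"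
  by (simp add: II_def Psi_def)

lemma Psi_sig: "(\<forall>a. a \<notin> II \<longrightarrow> t a = 0) \<Longrightarrow> Psi (sig t) = t"
proof (rule ext)
  fix a assume h: "\<forall>a. a \<notin> II \<longrightarrow> t a = 0"
  have "dotp (vv a) (sig t) = t a"
    by (rule dual) (use h in \<open>auto simp: II_def\<close>)
  then show "Psi (sig t) a = t a" by (simp add: Psi_def)
qed

lemma cont_FF: "continuous_on S FF"
proof (rule cont_fin_prod)
  fix i
  show "\<exists>J. finite J \<and> (\<forall>p q. (\<forall>k\<in>J. p k = q k) \<longrightarrow> FF p i = FF q i)"
    by (intro exI[of _ "{..<MM i}"]) (auto simp: FF_dot dotp_bnd[OF rr_bnd])
qed

lemma cont_Psi: "continuous_on S Psi"
proof (rule cont_fin_prod)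
  fix a
  show "\<exists>J. finite J \<and> (\<forall>p q. (\<forall>k\<in>J. p k = q k) \<longrightarrow> Psi p a = Psi q a)"
    by (intro exI[of _ "{..<Suc a}"]) (auto simp: Psi_def dotp_bnd[OF vv(2)])
qed

lemma cont_sig: "continuous_on S sig"
proof (rule cont_fin_prod)
  fix j
  show "\<exists>J. finite J \<and> (\<forall>p q. (\<forall>k\<in>J. p k = q k) \<longrightarrow> sig p j = sig q j)"
    by (intro exI[of _ "{..<cM j}"]) (auto simp: sig_def)
qed

lemma cim_sec: "s \<in> cimage f S \<Longrightarrow> s \<in> sec S"
  by (simp add: cimage_def)

lemma cim_pts: assumes "s \<in> cimage f S" "p \<in> S" shows "\<exists>x. s p = FF x"
proof -
  obtain n :: nat and Ts gs where H: "\<forall>j<n. light_profinite (Ts j) \<and> gs j \<in> cmap (Ts j) S"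
    "S \<subseteq> (\<Union>j<n. gs j ` Ts j)" "\<forall>j<n. pull (Ts j) (gs j) s \<in> f (Ts j) ` sec (Ts j)"
  proof -
    have "\<exists>(n::nat) Ts gs. (\<forall>j<n. light_profinite (Ts j) \<and> gs j \<in> cmap (Ts j) S) \<and>
      S \<subseteq> (\<Union>j<n. gs j ` Ts j) \<and> (\<forall>j<n. pull (Ts j) (gs j) s \<in> f (Ts j) ` sec (Ts j))"
      using assms(1) by (simp add: cimage_def)
    then show ?thesis using that by blast
  qed
  obtain j y where jy: "j < n" "y \<in> Ts j" "p = gs j y" using H(2) assms(2) by blast
  obtain l where l: "l \<in> sec (Ts j)" "pull (Ts j) (gs j) s = f (Ts j) l" using H(3) jy(1) by blast
  have cl: "closed (Ts j)" using H(1) jy(1) by (simp add: light_profinite_def)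
  have "s p = pull (Ts j) (gs j) s y" using jy by (simp add: pull_def)
  also have "\<dots> = f (Ts j) l y" using l(2) by simp
  also have "\<dots> = FF (l y)" by (rule pt[OF cl l(1) jy(2)])
  finally show ?thesis by blast
qed

lemma cim_cont: assumes "s \<in> cimage f S" shows "continuous_on S (\<lambda>p. Phi (s p))"
proof -
  obtain n :: nat and Ts gs where H: "\<forall>j<n. light_profinite (Ts j) \<and> gs j \<in> cmap (Ts j) S"
    "S \<subseteq> (\<Union>j<n. gs j ` Ts j)" "\<forall>j<n. pull (Ts j) (gs j) s \<in> f (Ts j) ` sec (Ts j)"
  proof -
    have "\<exists>(n::nat) Ts gs. (\<forall>j<n. light_profinite (Ts j) \<and> gs j \<in> cmap (Ts j) S) \<and>
      S \<subseteq> (\<Union>j<n. gs j ` Ts j) \<and> (\<forall>j<n. pull (Ts j) (gs j) s \<in> f (Ts j) ` sec (Ts j))"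
      using assms(1) by (simp add: cimage_def)
    then show ?thesis using that by blast
  qed
  have Seq: "S = (\<Union>j\<in>{..<n}. gs j ` Ts j)"
    using H(1,2) by (auto simp: cmap_def)
  have piece: "continuous_on (gs j ` Ts j) (\<lambda>p. Phi (s p))" if j: "j < n" for j
  proof -
    obtain l where l: "l \<in> sec (Ts j)" "pull (Ts j) (gs j) s = f (Ts j) l" using H(3) j by blast
    have cl: "closed (Ts j)" using H(1) j by (simp add: light_profinite_def)
    have gc: "continuous_on (Ts j) (gs j)" using H(1) j by (simp add: cmap_def)
    have eq: "Phi (s (gs j y)) = Psi (l y)" if y: "y \<in> Ts j" for y
    proof -
      have "s (gs j y) = pull (Ts j) (gs j) s y" using y by (simp add: pull_def)
      also have "\<dots> = f (Ts j) l y" using l(2) by simp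
      also have "\<dots> = FF (l y)" by (rule pt[OF cl l(1) y])
      finally show ?thesis by (simp add: Phi_FF)
    qed
    have lc: "continuous_on (Ts j) l" using l(1) by (simp add: sec_def)
    have "continuous_on (Ts j) (Psi \<circ> l)" by (rule continuous_on_compose[OF lc cont_Psi])
    then have "continuous_on (Ts j) (\<lambda>y. Phi (s (gs j y)))"
      by (rule continuous_on_eq) (simp add: eq)
    then show ?thesis by (rule QCc[OF closed_compact_cantor[OF cl] gc])
  qed
  have clp: "closed (gs j ` Ts j)" if j: "j < n" for j
  proof -
    have cl: "closed (Ts j)" using H(1) j by (simp add: light_profinite_def)
    have gc: "continuous_on (Ts j) (gs j)" using H(1) j by (simp add: cmap_def)
    have "compact (gs j ` Ts j)" by (rule compact_continuous_image[OF gc closed_compact_cantor[OF cl]])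
    then show ?thesis by (rule compact_closed_cantor)
  qed
  have "continuous_on (\<Union>j\<in>{..<n}. gs j ` Ts j) (\<lambda>p. Phi (s p))"
    by (rule continuous_on_closed_Union) (auto intro: clp piece)
  then show ?thesis using Seq by simp
qed

end


context cendo begin

lemma phi_sec: assumes "u \<in> cimage f S" shows "phi S u \<in> secI II S"
proof -
  have "continuous_on S (\<lambda>p. Phi (u p))" by (rule cim_cont[OF assms])
  then have c: "continuous_on S (phi S u)" by (rule continuous_on_eq) (simp add: phi_def)
  have e: "\<forall>x. x \<notin> S \<longrightarrow> phi S u x = undefined" by (simp add: phi_def)
  have z: "\<forall>x\<in>S. \<forall>i. i \<notin> II \<longrightarrow> phi S u x i = 0"
  proof (intro ballI allI impI)
    fix x i assume x: "x \<in> S" and i: "i \<notin> II"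
    obtain y where "u x = FF y" using cim_pts[OF assms x] by blast
    then show "phi S u x i = 0" using x i by (simp add: phi_def Phi_FF Psi_out)
  qed
  show ?thesis using c e z by (simp add: secI_def sec_def)
qed

lemma phi_inj: "inj_on (phi S) (cimage f S)"
proof (rule inj_onI)
  fix u v assume u: "u \<in> cimage f S" and v: "v \<in> cimage f S" and e: "phi S u = phi S v"
  show "u = v"
  proof (rule ext)
    fix p
    show "u p = v p"
    proof (cases "p \<in> S")
      case True
      obtain x where x: "u p = FF x" using cim_pts[OF u True] by blast
      obtain y where y: "v p = FF y" using cim_pts[OF v True] by blast
      have "phi S u p = phi S v p" using e by simp
      then have "Psi x = Psi y" using True x y by (simp add: phi_def Phi_FF)
      then have "FF x = FF y" using FF_eq_iff by blast
      then show ?thesis using x y by simp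
    next
      case False
      then show ?thesis using cim_sec[OF u] cim_sec[OF v] by (simp add: sec_def)
    qed
  qed
qed

lemma phi_surj: assumes cl: "closed S" and t: "t \<in> secI II S" shows "t \<in> phi S ` cimage f S"
proof -
  have tsec: "t \<in> sec S" and tz: "\<forall>x\<in>S. \<forall>i. i \<notin> II \<longrightarrow> t x i = 0" using t by (auto simp: secI_def)
  define l where "l = (\<lambda>p. if p \<in> S then sig (t p) else undefined)"
  have tc: "continuous_on S t" using tsec by (simp add: sec_def)
  have "continuous_on S (sig \<circ> t)" by (rule continuous_on_compose[OF tc cont_sig])
  then have "continuous_on S l" by (rule continuous_on_eq) (simp add: l_def)
  then have lsec: "l \<in> sec S" by (simp add: sec_def l_def)
  define s where "s = f S l"
  have ssec: "s \<in> sec S" unfolding s_def by (rule ce_sec[OF cl lsec])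
  have pid: "pull S id s = s"
  proof (rule ext)
    fix p show "pull S id s p = s p" using ssec by (cases "p \<in> S") (auto simp: pull_def sec_def)
  qed
  have scim: "s \<in> cimage f S"
    unfolding cimage_def
  proof (intro CollectI conjI exI[of _ "Suc 0"] exI[of _ "\<lambda>_. S"] exI[of _ "\<lambda>_. id"])
    show "s \<in> sec S" by (rule ssec)
    show "\<forall>j<Suc 0. light_profinite S \<and> id \<in> cmap S S" using cl by (simp add: light_profinite_def cmap_def)
    show "S \<subseteq> (\<Union>j<Suc 0. id ` S)" by (simp add: lessThan_empty_iff)
    show "\<forall>j<Suc 0. pull S id s \<in> f S ` sec S" using pid lsec by (simp add: s_def)
  qed
  have "phi S s = t"
  proof (rule ext)
    fix p show "phi S s p = t p"
    proof (cases "p \<in> S")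
      case True
      have "s p = FF (l p)" unfolding s_def by (rule pt[OF cl lsec True])
      then have "phi S s p = Psi (sig (t p))" using True by (simp add: phi_def Phi_FF l_def)
      also have "\<dots> = t p" by (rule Psi_sig) (use tz True in blast)
      finally show ?thesis .
    next
      case False then show ?thesis using tsec by (simp add: phi_def sec_def)
    qed
  qed
  then show ?thesis using scim by blast
qed

lemma phi_add: assumes "u \<in> cimage f S" "v \<in> cimage f S"
  shows "phi S (sadd S u v) = sadd S (phi S u) (phi S v)"
proof (rule ext)
  fix p show "phi S (sadd S u v) p = sadd S (phi S u) (phi S v) p"
  proof (cases "p \<in> S")
    case True
    obtain x where x: "u p = FF x" using cim_pts[OF assms(1) True] by blast
    obtain y where y: "v p = FF y" using cim_pts[OF assms(2) True] by blast
    have "(\<lambda>i. u p i + v p i) = FF (\<lambda>j. x j + y j)" using x y by (simp add: FF_add)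
    then have "phi S (sadd S u v) p = Psi (\<lambda>j. x j + y j)" using True by (simp add: phi_def sadd_def Phi_FF)
    also have "\<dots> = (\<lambda>a. Psi x a + Psi y a)"
    proof (rule ext)
      fix a show "Psi (\<lambda>j. x j + y j) a = Psi x a + Psi y a"
        using dotp_lin2[of "vv a" x 1 y] by (simp add: Psi_def)
    qed
    also have "\<dots> = sadd S (phi S u) (phi S v) p" using True x y by (simp add: sadd_def phi_def Phi_FF)
    finally show ?thesis .
  next
    case False then show ?thesis by (simp add: phi_def sadd_def)
  qed
qed

lemma main: "image_iso_prodZ f II phi"
  unfolding image_iso_prodZ_def
proof (intro conjI allI impI ballI)
  fix S assume "light_profinite S"
  then have cl: "closed S" by (simp add: light_profinite_def)
  show "bij_betw (phi S) (cimage f S) (secI II S)"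
    unfolding bij_betw_def
  proof
    show "inj_on (phi S) (cimage f S)" by (rule phi_inj)
    show "phi S ` cimage f S = secI II S"
      using phi_sec phi_surj[OF cl] by blast
  qed
next
  fix S u v assume "light_profinite S" "u \<in> cimage f S" "v \<in> cimage f S"
  then show "phi S (sadd S u v) = sadd S (phi S u) (phi S v)" using phi_add by blast
next
  fix S T g u assume "light_profinite S" "light_profinite T" "g \<in> cmap T S" "u \<in> cimage f S"
  show "phi T (pull T g u) = pull T g (phi S u)"
  proof (rule ext)
    fix p show "phi T (pull T g u) p = pull T g (phi S u) p"
      using \<open>g \<in> cmap T S\<close> by (cases "p \<in> T") (auto simp: phi_def pull_def cmap_def)
  qed
qed

end

theorem lemma3p13:
  assumes "condensed_endo f"
  shows "\<exists>(I::nat set) \<phi>. image_iso_prodZ f I \<phi>"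
proof -
  interpret cendo f by unfold_locales (rule assms)
  show ?thesis using main by blast
qed


end
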